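(* Let $p$ be an odd prime, $q=p^\alpha$ with $\alpha\ge1$, $a$ an integer prime to $p$, and $\epsilon\in\{+1,-1\}$. Then the $\mathrm{SL}_2(\mathbb{Z})$-module $W_1^\epsilon(L_q(a))$ is irreducible, and $q$ is the smallest positive integer $N$ such that the principal congruence subgroup $\Gamma(N)$ acts trivially on it. Moreover, for $q'=p^{\alpha'}$ with $\alpha'\ge1$, $a'$ prime to $p$ and $\epsilon'\in\{\pm1\}$, the modules $W_1^\epsilon(L_q(a))$ and $W_1^{\epsilon'}(L_{q'}(a'))$ are isomorphic if and only if $q=q'$, $\epsilon=\epsilon'$ and $aa'$ is a square modulo $p$.
   Context: $e(t)=\exp(2\pi it)$. For a finite quadratic module $M$ (finite abelian group with $Q:M\to\mathbb{Q}/\mathbb{Z}$, $Q(bx)=b^2Q(x)$, nondegenerate bilinear $B(x,y)=Q(x+y)-Q(x)-Q(y)$), put $\sigma=|M|^{-1/2}\sum_xe(-Q(x))$; $W(M)$ is the vector space with basis $\mathfrak{e}_x$ ($x\in M$) and action of $\mathrm{SL}_2(\mathbb{Z})$ (valid here since $\sigma^4=1$) determined by $T\mathfrak{e}_x=e(Q(x))\mathfrak{e}_x$, $S\mathfrak{e}_x=\sigma|M|^{-1/2}\sum_ye(-B(y,x))\mathfrak{e}_y$, $T=[1,1;0,1]$, $S=[0,-1;1,0]$. It carries the invariant scalar product with $(\mathfrak{e}_x,\mathfrak{e}_y)=\delta_{x,y}$. $L_q(a)$ is the module $\mathbb{Z}/q\mathbb{Z}$ with $Q(x)=ax^2/q$.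 For $\alpha\ge2$, $W(L_{q/p^2}(a))$ embeds $\mathrm{SL}_2(\mathbb{Z})$-equivariantly into $W(L_q(a))$ via $\mathfrak{e}_{y}\mapsto\sum_{x\in\mathbb{Z}/q\mathbb{Z},\ x\equiv py\bmod p^{\alpha-1}}\mathfrak{e}_x$ (this comes from the isotropic subgroup $U=p^{\alpha-1}L_q(a)$ with $U^\perp/U\cong L_{q/p^2}(a)$). $W_1(L_q(a))$ is the orthogonal complement of this image (and $W_1(L_q(a))=W(L_q(a))$ if $\alpha=1$). $W_1^\epsilon(L_q(a))$ is the $\epsilon$-eigenspace in $W_1(L_q(a))$ of the involution $\mathfrak{e}_x\mapsto\mathfrak{e}_{-x}$; it is an $\mathrm{SL}_2(\mathbb{Z})$-submodule. *)

theory Defs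
  imports Complex_Main "HOL-Number_Theory.Cong"
begin

definition ee :: "real \<Rightarrow> complex" where
  "ee t = exp (2 * pi * \<i> * complex_of_real t)"

type_synonym mat2 = "(int \<times> int) \<times> (int \<times> int)"

fun mmul :: "mat2 \<Rightarrow> mat2 \<Rightarrow> mat2" where
  "mmul ((a,b),(c,d)) ((a',b'),(c',d')) =
     ((a*a' + b*c', a*b' + b*d'), (c*a' + d*c', c*b' + d*d'))"

definition mid :: mat2 where "mid = ((1,0),(0,1))"

datatype gen = GenS | GenT

fun gen_mat :: "gen \<Rightarrow> mat2" where
  "gen_mat GenS = ((0,-1),(1,0))"
| "gen_mat GenT = ((1,1),(0,1))"

text \<open>Words in S and T (these generate SL_2(Z) as a monoid, since S^4 = 1 and
  T^-1 = S T S T S^3). The matrix of a word is the product of its letters.\<close>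
fun word_mat :: "gen list \<Rightarrow> mat2" where
  "word_mat [] = mid"
| "word_mat (g # w) = mmul (gen_mat g) (word_mat w)"

fun word_act :: "(gen \<Rightarrow> (int \<Rightarrow> complex) \<Rightarrow> (int \<Rightarrow> complex)) \<Rightarrow> gen list
                   \<Rightarrow> (int \<Rightarrow> complex) \<Rightarrow> (int \<Rightarrow> complex)" where
  "word_act act [] f = f"
| "word_act act (g # w) f = act g (word_act act w f)"

definition in_Gamma :: "nat \<Rightarrow> mat2 \<Rightarrow> bool" where
  "in_Gamma N M = (case M of ((a,b),(c,d)) \<Rightarrow>
      [a = 1] (mod int N) \<and> [b = 0] (mod int N) \<and> [c = 0] (mod int N) \<and> [d = 1] (mod int N))"

text \<open>W(L_q(a)), q = p^alpha: vectors sum_x f(x) e_x, encoded as q-periodic functions Z -> C.\<close>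
definition Wsp :: "nat \<Rightarrow> (int \<Rightarrow> complex) set" where
  "Wsp q = {f. \<forall>x. f (x + int q) = f x}"

definition Qform :: "nat \<Rightarrow> int \<Rightarrow> int \<Rightarrow> real" where
  "Qform q a x = real_of_int (a * x^2) / real q"

definition Bform :: "nat \<Rightarrow> int \<Rightarrow> int \<Rightarrow> int \<Rightarrow> real" where
  "Bform q a x y = Qform q a (x + y) - Qform q a x - Qform q a y"

definition sigma :: "nat \<Rightarrow> int \<Rightarrow> complex" where
  "sigma q a = (1 / complex_of_real (sqrt (real q))) * (\<Sum>x\<in>{0..<int q}. ee (- Qform q a x))"

fun weil :: "nat \<Rightarrow> int \<Rightarrow> gen \<Rightarrow> (int \<Rightarrow> complex) \<Rightarrow> (int \<Rightarrow> complex)" where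
  "weil q a GenT f = (\<lambda>x. ee (Qform q a x) * f x)"
| "weil q a GenS f = (\<lambda>y. sigma q a * (1 / complex_of_real (sqrt (real q))) *
                           (\<Sum>x\<in>{0..<int q}. ee (- Bform q a y x) * f x))"

definition wip :: "nat \<Rightarrow> (int \<Rightarrow> complex) \<Rightarrow> (int \<Rightarrow> complex) \<Rightarrow> complex" where
  "wip q f g = (\<Sum>x\<in>{0..<int q}. f x * cnj (g x))"

text \<open>Image of the basis vector e_y of W(L_{q/p^2}(a)) in W(L_q(a)), q = p^alpha:
  sum of e_x over x mod q with x = p y mod p^(alpha-1).\<close>
definition incl :: "nat \<Rightarrow> nat \<Rightarrow> int \<Rightarrow> (int \<Rightarrow> complex)" where
  "incl p \<alpha> y = (\<lambda>x. if [x = int p * y] (mod int (p ^ (\<alpha> - 1))) then 1 else 0)"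

definition W1 :: "nat \<Rightarrow> nat \<Rightarrow> (int \<Rightarrow> complex) set" where
  "W1 p \<alpha> = (if \<alpha> \<ge> 2
     then {f \<in> Wsp (p ^ \<alpha>). \<forall>y. wip (p ^ \<alpha>) f (incl p \<alpha> y) = 0}
     else Wsp (p ^ \<alpha>))"

definition W1eps :: "nat \<Rightarrow> nat \<Rightarrow> int \<Rightarrow> (int \<Rightarrow> complex) set" where
  "W1eps p \<alpha> \<epsilon> = {f \<in> W1 p \<alpha>. (\<lambda>x. f (- x)) = (\<lambda>x. of_int \<epsilon> * f x)}"

definition csubspace :: "(int \<Rightarrow> complex) set \<Rightarrow> bool" where
  "csubspace U \<longleftrightarrow> (\<lambda>_. 0) \<in> U \<and> (\<forall>f\<in>U. \<forall>g\<in>U. (\<lambda>x. f x + g x) \<in> U)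
      \<and> (\<forall>c. \<forall>f\<in>U. (\<lambda>x. c * f x) \<in> U)"

definition invariant :: "(gen \<Rightarrow> (int \<Rightarrow> complex) \<Rightarrow> (int \<Rightarrow> complex)) \<Rightarrow> (int \<Rightarrow> complex) set \<Rightarrow> bool" where
  "invariant act U \<longleftrightarrow> (\<forall>w. \<forall>f\<in>U. word_act act w f \<in> U)"

definition irreducible_mod :: "(gen \<Rightarrow> (int \<Rightarrow> complex) \<Rightarrow> (int \<Rightarrow> complex)) \<Rightarrow> (int \<Rightarrow> complex) set \<Rightarrow> bool" where
  "irreducible_mod act V \<longleftrightarrow> V \<noteq> {\<lambda>_. 0} \<and>
     (\<forall>U. csubspace U \<and> U \<subseteq> V \<and> invariant act U \<longrightarrow> U = {\<lambda>_. 0} \<or> U = V)"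

definition Gamma_trivial :: "(gen \<Rightarrow> (int \<Rightarrow> complex) \<Rightarrow> (int \<Rightarrow> complex)) \<Rightarrow> (int \<Rightarrow> complex) set \<Rightarrow> nat \<Rightarrow> bool" where
  "Gamma_trivial act V N \<longleftrightarrow> (\<forall>w. in_Gamma N (word_mat w) \<longrightarrow> (\<forall>f\<in>V. word_act act w f = f))"

definition iso_mod :: "(gen \<Rightarrow> (int \<Rightarrow> complex) \<Rightarrow> (int \<Rightarrow> complex)) \<Rightarrow> (int \<Rightarrow> complex) set \<Rightarrow>
                       (gen \<Rightarrow> (int \<Rightarrow> complex) \<Rightarrow> (int \<Rightarrow> complex)) \<Rightarrow> (int \<Rightarrow> complex) set \<Rightarrow> bool" where
  "iso_mod act1 V1 act2 V2 \<longleftrightarrow> (\<exists>\<phi>. bij_betw \<phi> V1 V2 \<and>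
     (\<forall>f\<in>V1. \<forall>g\<in>V1. \<phi> (\<lambda>x. f x + g x) = (\<lambda>x. \<phi> f x + \<phi> g x)) \<and>
     (\<forall>c. \<forall>f\<in>V1. \<phi> (\<lambda>x. c * f x) = (\<lambda>x. c * \<phi> f x)) \<and>
     (\<forall>w. \<forall>f\<in>V1. \<phi> (word_act act1 w f) = word_act act2 w (\<phi> f)))"

end

theory Submission
  imports Defs "HOL-Analysis.Complex_Transcendental" "HOL-Number_Theory.Euler_Criterion"
begin


lemmas congdef = Cong.unique_euclidean_semiring_class.cong_def

definition ez :: "nat \<Rightarrow> int \<Rightarrow> complex" where
  "ez q r = ee (of_int r / real q)"

lemma ee_add: "ee (x + y) = ee x * ee y"
  unfolding ee_def by (simp add: distrib_left exp_add)

lemma ee_int: "ee (of_int k) = 1"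
proof -
  have "exp (2 * pi * \<i> * complex_of_real (of_int k)) = exp ((2 * complex_of_int k * pi) * \<i>)"
    by (simp add: mult_ac)
  also have "\<dots> = 1" using exp_integer_2pi[of "of_int k"] by simp
  finally show ?thesis unfolding ee_def .
qed

lemma ee_eq_1_iff: "ee x = 1 \<longleftrightarrow> x \<in> \<int>"
proof
  assume "ee x = 1"
  then have "exp (2 * pi * \<i> * complex_of_real x) = 1" by (simp add: ee_def)
  then obtain n :: int where n: "2 * pi * \<i> * complex_of_real x = 2 * pi * of_int n * \<i>"
    by (auto simp: exp_eq_1)
  then have "complex_of_real x = of_int n" by (simp add: mult_ac)
  then have "x = of_int n" by (metis of_real_eq_iff of_real_of_int_eq)
  then show "x \<in> \<int>" by simp
next
  assume "x \<in> \<int>" then obtain k where "x = of_int k" by (auto elim: Ints_cases)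
  then show "ee x = 1" by (simp add: ee_int)
qed

lemma ee_nonzero: "ee x \<noteq> 0" by (simp add: ee_def)

lemma ee_norm: "norm (ee x) = 1"
  unfolding ee_def by (simp add: norm_exp_eq_Re)

lemma ee_cnj: "cnj (ee x) = ee (- x)"
  unfolding ee_def by (simp add: exp_cnj)

lemma ee_neg: "ee (- x) = inverse (ee x)"
  unfolding ee_def by (simp add: exp_minus)

lemma ee_zero[simp]: "ee 0 = 1" by (simp add: ee_def)

lemma eq_add: "ez q (r + s) = ez q r * ez q s"
  unfolding ez_def by (simp add: add_divide_distrib ee_add)

lemma eq_zero[simp]: "ez q 0 = 1" by (simp add: ez_def)

lemma eq_nonzero: "ez q r \<noteq> 0" by (simp add: ez_def ee_nonzero)

lemma eq_cnj: "cnj (ez q r) = ez q (- r)" by (simp add: ez_def ee_cnj)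

lemma eq_neg: "ez q (- r) = inverse (ez q r)"
  by (simp add: ez_def ee_neg)

lemma eq_norm: "norm (ez q r) = 1" by (simp add: ez_def ee_norm)

lemma eq_mult_q: "q > 0 \<Longrightarrow> ez q (int q * k) = 1"
  by (simp add: ez_def ee_int)

lemma eq_cong: assumes "q > 0" "[r = s] (mod int q)" shows "ez q r = ez q s"
proof -
  from assms(2) obtain k where "r = s + int q * k"
    by (metis cong_iff_lin cong_sym)
  then show ?thesis using assms(1) by (simp add: eq_add eq_mult_q)
qed

lemma eq_1_iff: assumes "q > 0" shows "ez q r = 1 \<longleftrightarrow> int q dvd r"
proof
  assume "ez q r = 1"
  then have "of_int r / real q \<in> \<int>" by (simp add: ez_def ee_eq_1_iff)
  then obtain k where k: "of_int r / real q = of_int k" by (auto elim: Ints_cases)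
  then have "real_of_int r = real q * of_int k" using assms by (simp add: field_simps)
  then have "r = int q * k" by (metis of_int_eq_iff of_int_mult of_int_of_nat_eq)
  then show "int q dvd r" by simp
next
  assume "int q dvd r" then obtain k where "r = int q * k" by auto
  then show "ez q r = 1" using assms by (simp add: eq_mult_q)
qed

lemma eq_eq_iff: assumes "q > 0" shows "ez q r = ez q s \<longleftrightarrow> [r = s] (mod int q)"
proof -
  have "ez q r = ez q s \<longleftrightarrow> ez q (r - s) = 1"
    using eq_add[of q "r - s" s] eq_nonzero[of q s] by (auto simp: field_simps)
  also have "\<dots> \<longleftrightarrow> [r = s] (mod int q)" using assms eq_1_iff
    by (simp add: cong_iff_dvd_diff)
  finally show ?thesis .
qed

lemma eq_pow: "ez q (r * int k) = ez q r ^ k"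
  by (induction k) (simp_all add: distrib_left eq_add)

lemma geom_sum: assumes "q > 0"
  shows "(\<Sum>k\<in>{0..<int q}. ez q (k * m)) = (if int q dvd m then of_nat q else 0)"
proof -
  have "(\<Sum>k\<in>{0..<int q}. ez q (k * m)) = (\<Sum>k\<in>{0..<q}. ez q (int k * m))"
  proof -
    have "{0..<int q} = int ` {0..<q}" by (simp add: image_int_atLeastLessThan)
    then show ?thesis by (simp add: sum.reindex)
  qed
  also have "\<dots> = (\<Sum>k\<in>{0..<q}. ez q m ^ k)" by (simp add: eq_pow mult.commute)
  finally have *: "(\<Sum>k\<in>{0..<int q}. ez q (k * m)) = (\<Sum>k<q. ez q m ^ k)"
    by (simp add: atLeast0LessThan)
  show ?thesis
  proof (cases "int q dvd m")
    case True
    then have "ez q m = 1" using assms eq_1_iff by blast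
    then show ?thesis using * True by simp
  next
    case False
    then have ne: "ez q m \<noteq> 1" using assms eq_1_iff by blast
    have "ez q m ^ q = 1" using eq_pow[of q m q] eq_mult_q[of q m] assms by (simp add: mult.commute)
    then have "(\<Sum>k<q. ez q m ^ k) = 0" using ne by (simp add: sum_gp_strict)
    then show ?thesis using * False by simp
  qed
qed

lemma ee_Qform: "ee (Qform q a x) = ez q (a * x^2)"
  by (simp add: Qform_def ez_def)

lemma ee_mQform: "ee (- Qform q a x) = ez q (- (a * x^2))"
  by (simp add: Qform_def ez_def)

lemma ee_mBform: "ee (- Bform q a y x) = ez q (- (2 * a * y * x))"
proof -
  have "Bform q a y x = of_int (2 * a * y * x) / real q"
    by (simp add: Bform_def Qform_def power2_eq_square diff_divide_distrib[symmetric] algebra_simps)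
  then show ?thesis by (simp add: ez_def)
qed


definition periodic :: "nat \<Rightarrow> (int \<Rightarrow> 'a) \<Rightarrow> bool" where
  "periodic q F \<longleftrightarrow> (\<forall>x. F (x + int q) = F x)"

lemma Wsp_periodic: "f \<in> Wsp q \<longleftrightarrow> periodic q f"
  by (simp add: Wsp_def periodic_def)

lemma periodic_mult: assumes "periodic q F" shows "F (x + int q * k) = F x"
proof (induction k rule: int_induct[where k = 0])
  case base then show ?case by simp
next
  case (step1 i)
  have "F (x + int q * (i + 1)) = F ((x + int q * i) + int q)" by (simp add: algebra_simps)
  also have "\<dots> = F (x + int q * i)" using assms by (simp add: periodic_def)
  finally show ?case using step1 by simp
next
  case (step2 i)
  have "F (x + int q * i) = F ((x + int q * (i - 1)) + int q)" by (simp add: algebra_simps)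
  also have "\<dots> = F (x + int q * (i - 1))" using assms by (simp add: periodic_def)
  finally show ?case using step2 by simp
qed

lemma periodic_cong: assumes "periodic q F" "[x = y] (mod int q)" shows "F x = F y"
proof -
  from assms(2) obtain k where "x = y + int q * k" by (metis cong_iff_lin cong_sym)
  then show ?thesis using periodic_mult[OF assms(1)] by simp
qed

lemma periodic_mod: "periodic q F \<Longrightarrow> F (x mod int q) = F x"
  by (rule periodic_cong) (auto simp: congdef)

lemma sum_bij_mod:
  assumes q: "q > 0" and P: "periodic q F"
    and inj: "\<And>x y. x \<in> {0..<int q} \<Longrightarrow> y \<in> {0..<int q} \<Longrightarrow> [h x = h y] (mod int q) \<Longrightarrow> x = y"
  shows "(\<Sum>x\<in>{0..<int q}. F (h x)) = (\<Sum>x\<in>{0..<int q}. F x)"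
proof -
  let ?g = "\<lambda>x. h x mod int q"
  have injg: "inj_on ?g {0..<int q}"
  proof (rule inj_onI)
    fix x y assume "x \<in> {0..<int q}" "y \<in> {0..<int q}" "?g x = ?g y"
    then have "h x mod int q = h y mod int q" by simp
    then have "[h x = h y] (mod int q)" by (simp add: congdef)
    then show "x = y" using inj \<open>x \<in> _\<close> \<open>y \<in> _\<close> by blast
  qed
  have "(\<Sum>x\<in>{0..<int q}. F (h x)) = (\<Sum>x\<in>{0..<int q}. F (?g x))"
    using periodic_mod[OF P] by simp
  also have "\<dots> = (\<Sum>x\<in>?g ` {0..<int q}. F x)"
  proof (rule sum.reindex[symmetric, unfolded comp_def])
    show "inj_on ?g {0..<int q}" by (rule injg)
  qed
  also have "?g ` {0..<int q} = {0..<int q}"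
  proof (rule endo_inj_surj)
    show "inj_on ?g {0..<int q}" by (rule injg)
    show "?g ` {0..<int q} \<subseteq> {0..<int q}" using q by auto
  qed simp
  finally show ?thesis .
qed

lemma sum_affine:
  assumes q: "q > 0" and P: "periodic q F" and u: "coprime u (int q)"
  shows "(\<Sum>x\<in>{0..<int q}. F (u * x + b)) = (\<Sum>x\<in>{0..<int q}. F x)"
proof (rule sum_bij_mod[OF q P])
  fix x y assume xy: "x \<in> {0..<int q}" "y \<in> {0..<int q}" "[u * x + b = u * y + b] (mod int q)"
  then have "[u * x = u * y] (mod int q)" by (metis cong_add_rcancel)
  then have "[x = y] (mod int q)" using u cong_mult_lcancel by blast
  then show "x = y" using xy cong_less_imp_eq_int by auto
qed

lemma sum_shift:
  assumes q: "q > 0" and P: "periodic q F"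
  shows "(\<Sum>x\<in>{0..<int q}. F (x + b)) = (\<Sum>x\<in>{0..<int q}. F x)"
  using sum_affine[OF q P, of 1 b] by simp

lemma sum_neg:
  assumes q: "q > 0" and P: "periodic q F"
  shows "(\<Sum>x\<in>{0..<int q}. F (- x)) = (\<Sum>x\<in>{0..<int q}. F x)"
  using sum_affine[OF q P, of "-1" 0] by simp

lemma sum_split:
  fixes m n :: int
  assumes "m > 0" "n > 0"
  shows "(\<Sum>x\<in>{0..<m * n}. F x) = (\<Sum>r\<in>{0..<m}. \<Sum>t\<in>{0..<n}. F (r + m * t))"
proof -
  let ?h = "\<lambda>(r, t). r + m * t"
  have bij: "bij_betw ?h ({0..<m} \<times> {0..<n}) {0..<m * n}"
  proof (rule bij_betwI[where g = "\<lambda>x. (x mod m, x div m)"])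
    show "?h \<in> {0..<m} \<times> {0..<n} \<rightarrow> {0..<m * n}"
    proof
      fix z assume "z \<in> {0..<m} \<times> {0..<n}"
      then obtain r t where z: "z = (r, t)" "0 \<le> r" "r < m" "0 \<le> t" "t < n" by auto
      have "m * t \<le> m * (n - 1)" using z assms by (intro mult_left_mono) auto
      then show "?h z \<in> {0..<m * n}" using z assms by (auto simp: algebra_simps)
    qed
    show "(\<lambda>x. (x mod m, x div m)) \<in> {0..<m * n} \<rightarrow> {0..<m} \<times> {0..<n}"
    proof
      fix x assume x: "x \<in> {0..<m * n}"
      have "x < n * m" using x by (simp add: mult.commute)
      have d: "x = m * (x div m) + x mod m" by simp
      have "x mod m \<ge> 0" using assms by simp
      have "x div m < n"
      proof (rule ccontr)
        assume "\<not> x div m < n"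
        then have "m * n \<le> m * (x div m)" using assms by (intro mult_left_mono) auto
        moreover have "m * (x div m) \<le> x" using d \<open>x mod m \<ge> 0\<close> by linarith
        ultimately show False using \<open>x < n * m\<close> by (simp add: mult.commute)
      qed
      then show "(x mod m, x div m) \<in> {0..<m} \<times> {0..<n}" using x assms by (auto simp: pos_imp_zdiv_nonneg_iff)
    qed
    show "(\<lambda>x. (x mod m, x div m)) (?h z) = z" if "z \<in> {0..<m} \<times> {0..<n}" for z
      using that assms by auto
    show "?h (x mod m, x div m) = x" if "x \<in> {0..<m * n}" for x
      by (simp add: mult.commute)
  qed
  have "(\<Sum>x\<in>{0..<m * n}. F x) = (\<Sum>z\<in>{0..<m} \<times> {0..<n}. F (?h z))"
    using sum.reindex_bij_betw[OF bij, of F] by simp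
  also have "\<dots> = (\<Sum>r\<in>{0..<m}. \<Sum>t\<in>{0..<n}. F (r + m * t))"
    by (simp add: sum.cartesian_product split_def)
  finally show ?thesis .
qed

lemma periodic_eq: "q > 0 \<Longrightarrow> periodic q (\<lambda>x. ez q (c * x))"
  unfolding periodic_def by (intro allI eq_cong) (auto simp: cong_iff_dvd_diff algebra_simps)


definition gs :: "nat \<Rightarrow> int \<Rightarrow> complex" where
  "gs q c = (\<Sum>x\<in>{0..<int q}. ez q (c * x^2))"

abbreviation cs :: "nat \<Rightarrow> complex" where "cs q \<equiv> complex_of_real (sqrt (real q))"

lemma cs_sq: "cs q * cs q = of_nat q"
proof -
  have 1: "sqrt (real q) * sqrt (real q) = real q" by simp
  have "cs q * cs q = complex_of_real (real q)" by (simp only: of_real_mult[symmetric] 1)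
  then show ?thesis by simp
qed

lemma cs_nz: "q > 0 \<Longrightarrow> cs q \<noteq> 0" by simp

lemma sigma_gs: "sigma q a = gs q (- a) / cs q"
  by (simp add: sigma_def gs_def ee_mQform)

lemma weilT: "weil q a GenT f = (\<lambda>x. ez q (a * x^2) * f x)"
  by (simp add: ee_Qform)

lemma weilS: "weil q a GenS f = (\<lambda>y. sigma q a / cs q * (\<Sum>x\<in>{0..<int q}. ez q (- (2 * a * y * x)) * f x))"
  by (simp add: ee_mBform)

declare weil.simps[simp del]

lemma word_act_append: "word_act act (w1 @ w2) f = word_act act w1 (word_act act w2 f)"
  by (induction w1) auto

lemma word_mat_append: "word_mat (w1 @ w2) = mmul (word_mat w1) (word_mat w2)"
proof (induction w1)
  case Nil
  obtain a b c d where "word_mat w2 = ((a,b),(c,d))" by (metis prod.exhaust)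
  then show ?case by (simp add: mid_def)
next
  case (Cons g w)
  obtain a b c d where 1: "gen_mat g = ((a,b),(c,d))" by (metis prod.exhaust)
  obtain a' b' c' d' where 2: "word_mat w = ((a',b'),(c',d'))" by (metis prod.exhaust)
  obtain a'' b'' c'' d'' where 3: "word_mat w2 = ((a'',b''),(c'',d''))" by (metis prod.exhaust)
  show ?case using Cons 1 2 3 by (simp add: algebra_simps)
qed

lemma weil_lin: "weil q a g (\<lambda>x. c * f x + h x) = (\<lambda>x. c * weil q a g f x + weil q a g h x)"
  by (cases g) (auto simp: weilT weilS algebra_simps sum.distrib sum_distrib_left)

lemma weil_zero: "weil q a g (\<lambda>x. 0) = (\<lambda>x. 0)"
  by (cases g) (auto simp: weilT weilS)

lemma word_act_lin: "word_act (weil q a) w (\<lambda>x. c * f x + h x) = (\<lambda>x. c * word_act (weil q a) w f x + word_act (weil q a) w h x)"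
  by (induction w) (auto simp: weil_lin)

lemma word_act_zero: "word_act (weil q a) w (\<lambda>x. 0) = (\<lambda>x. 0)"
  by (induction w) (auto simp: weil_zero)

lemma word_act_sum: "finite I \<Longrightarrow> word_act (weil q a) w (\<lambda>x. \<Sum>i\<in>I. c i * f i x) = (\<lambda>x. \<Sum>i\<in>I. c i * word_act (weil q a) w (f i) x)"
proof (induction I rule: finite_induct)
  case empty then show ?case by (simp add: word_act_zero)
next
  case (insert i I)
  have "word_act (weil q a) w (\<lambda>x. \<Sum>i\<in>insert i I. c i * f i x) = word_act (weil q a) w (\<lambda>x. c i * f i x + (\<Sum>i\<in>I. c i * f i x))"
    using insert by simp
  also have "\<dots> = (\<lambda>x. c i * word_act (weil q a) w (f i) x + (\<Sum>i\<in>I. c i * word_act (weil q a) w (f i) x))"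
    by (simp add: word_act_lin insert.IH)
  finally show ?case using insert by simp
qed

lemma word_act_smult: "word_act (weil q a) w (\<lambda>x. c * f x) = (\<lambda>x. c * word_act (weil q a) w f x)"
  using word_act_lin[of q a w c f "\<lambda>x. 0"] by (simp add: word_act_zero)

lemma word_act_add: "word_act (weil q a) w (\<lambda>x. f x + h x) = (\<lambda>x. word_act (weil q a) w f x + word_act (weil q a) w h x)"
  using word_act_lin[of q a w 1 f h] by simp

lemma periodic_eq_sq: "q > 0 \<Longrightarrow> periodic q (\<lambda>x. ez q (c * x^2))"
  unfolding periodic_def
  by (intro allI eq_cong) (auto simp: cong_iff_dvd_diff algebra_simps power2_eq_square)

lemma weil_periodic: assumes "q > 0" "periodic q f" shows "periodic q (weil q a g f)"
proof (cases g)
  case GenS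
  have "ez q (- (2 * a * (y + int q) * x)) = ez q (- (2 * a * y * x))" for y x
    using assms(1) by (intro eq_cong) (auto simp: cong_iff_dvd_diff algebra_simps)
  then show ?thesis using GenS by (simp add: periodic_def weilS)
next
  case GenT
  then show ?thesis using assms periodic_eq_sq[OF assms(1), of a]
    by (simp add: periodic_def weilT)
qed

lemma word_act_periodic: "q > 0 \<Longrightarrow> periodic q f \<Longrightarrow> periodic q (word_act (weil q a) w f)"
  by (induction w) (auto simp: weil_periodic)

lemma word_mat_Tpow: "word_mat (replicate k GenT) = ((1, int k), (0, 1))"
  by (induction k) (auto simp: mid_def)

lemma word_act_Tpow: "word_act (weil q a) (replicate k GenT) f = (\<lambda>x. ez q (int k * a * x^2) * f x)"
proof (induction k)
  case 0 then show ?case by simp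
next
  case (Suc k)
  have "ez q (a * x\<^sup>2) * ez q (int k * a * x\<^sup>2) = ez q ((1 + int k) * a * x\<^sup>2)" for x
    by (simp add: eq_add[symmetric] algebra_simps)
  then show ?case using Suc by (auto simp: weilT mult.assoc[symmetric])
qed

lemma sum_delta_mod:
  assumes q: "q > 0"
  shows "(\<Sum>x\<in>{0..<int q}. (if int q dvd (z + x) then F x else 0)) = F ((- z) mod int q)"
proof -
  have "(\<Sum>x\<in>{0..<int q}. (if int q dvd (z + x) then F x else 0)) =
        (\<Sum>x\<in>{0..<int q}. (if x = (- z) mod int q then F x else 0))"
  proof (rule sum.cong[OF refl])
    fix x assume x: "x \<in> {0..<int q}"
    have "int q dvd (z + x) \<longleftrightarrow> x = (- z) mod int q"
    proof
      assume "int q dvd (z + x)"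
      then have "[x = - z] (mod int q)" by (simp add: cong_iff_dvd_diff add.commute)
      then show "x = (- z) mod int q" using x by (simp add: congdef)
    next
      assume "x = (- z) mod int q"
      then have "[x = - z] (mod int q)" by (simp add: congdef)
      then show "int q dvd (z + x)" by (simp add: cong_iff_dvd_diff add.commute)
    qed
    then show "(if int q dvd (z + x) then F x else 0) = (if x = (- z) mod int q then F x else 0)" by simp
  qed
  also have "\<dots> = F ((- z) mod int q)" using q by (simp add: sum.delta)
  finally show ?thesis .
qed

lemma coprime_dvd_mult_cancel:
  assumes "coprime c (int q)" "int q dvd c * h" shows "int q dvd h"
  using assms by (metis coprime_commute coprime_dvd_mult_right_iff)

lemma gs_norm_sq:
  assumes q: "q > 0" and c: "coprime (2 * c) (int q)"
  shows "gs q c * cnj (gs q c) = of_nat q"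
proof -
  have P1: "periodic q (\<lambda>x. ez q (c * x^2))" by (rule periodic_eq_sq[OF q])
  have "gs q c * cnj (gs q c) = (\<Sum>y\<in>{0..<int q}. \<Sum>x\<in>{0..<int q}. ez q (c * x^2) * ez q (- (c * y^2)))"
    by (simp add: gs_def sum_distrib_left sum_distrib_right eq_cnj cnj_sum)
  also have "\<dots> = (\<Sum>y\<in>{0..<int q}. \<Sum>h\<in>{0..<int q}. ez q (c * h^2) * ez q (h * (2 * c * y)))"
  proof (rule sum.cong[OF refl])
    fix y
    have P: "periodic q (\<lambda>x. ez q (c * x^2) * ez q (- (c * y^2)))"
      using P1 by (simp add: periodic_def)
    have "(\<Sum>x\<in>{0..<int q}. ez q (c * x^2) * ez q (- (c * y^2))) =
          (\<Sum>h\<in>{0..<int q}. ez q (c * (h + y)^2) * ez q (- (c * y^2)))"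
      using sum_shift[OF q P, of y] by simp
    also have "\<dots> = (\<Sum>h\<in>{0..<int q}. ez q (c * h^2) * ez q (h * (2 * c * y)))"
      by (intro sum.cong refl) (simp add: eq_add[symmetric] power2_eq_square algebra_simps)
    finally show "(\<Sum>x\<in>{0..<int q}. ez q (c * x^2) * ez q (- (c * y^2))) = \<dots>" .
  qed
  also have "\<dots> = (\<Sum>h\<in>{0..<int q}. ez q (c * h^2) * (\<Sum>y\<in>{0..<int q}. ez q (y * (2 * c * h))))"
    by (subst sum.swap) (simp add: sum_distrib_left algebra_simps)
  also have "\<dots> = (\<Sum>h\<in>{0..<int q}. (if int q dvd (0 + h) then ez q (c * h^2) * of_nat q else 0))"
  proof (rule sum.cong[OF refl])
    fix h
    have "int q dvd 2 * c * h \<longleftrightarrow> int q dvd h"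
      using coprime_dvd_mult_cancel[OF c, of h] by (auto simp: mult.assoc)
    then show "ez q (c * h^2) * (\<Sum>y\<in>{0..<int q}. ez q (y * (2 * c * h))) = (if int q dvd (0 + h) then ez q (c * h^2) * of_nat q else 0)"
      using geom_sum[OF q, of "2 * c * h"] by simp
  qed
  also have "\<dots> = of_nat q"
    using sum_delta_mod[OF q, of 0 "\<lambda>h. ez q (c * h^2) * of_nat q"] by simp
  finally show ?thesis .
qed

lemma gs_nz: "q > 0 \<Longrightarrow> coprime (2 * c) (int q) \<Longrightarrow> gs q c \<noteq> 0"
  using gs_norm_sq[of q c] by auto

lemma sigma_nz: assumes "q > 0" "coprime (2 * a) (int q)" shows "sigma q a \<noteq> 0"
proof -
  have "coprime (2 * (- a)) (int q)" using assms(2) by simp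
  then show ?thesis using gs_nz[OF assms(1)] assms(1) by (simp add: sigma_gs)
qed

lemma weil_S2:
  assumes q: "q > 0" and c: "coprime (2 * a) (int q)" and f: "periodic q f"
  shows "weil q a GenS (weil q a GenS f) = (\<lambda>z. sigma q a ^ 2 * f (- z))"
proof
  fix z
  let ?s = "sigma q a / cs q"
  have "weil q a GenS (weil q a GenS f) z =
     ?s * ?s * (\<Sum>y\<in>{0..<int q}. \<Sum>x\<in>{0..<int q}. ez q (- (2 * a * z * y)) * ez q (- (2 * a * y * x)) * f x)"
    by (simp add: weilS sum_distrib_left algebra_simps)
  also have "(\<Sum>y\<in>{0..<int q}. \<Sum>x\<in>{0..<int q}. ez q (- (2 * a * z * y)) * ez q (- (2 * a * y * x)) * f x)
     = (\<Sum>x\<in>{0..<int q}. f x * (\<Sum>y\<in>{0..<int q}. ez q (y * (- (2 * a) * (z + x)))))"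
    by (subst sum.swap) (simp add: sum_distrib_left algebra_simps eq_add[symmetric])
  also have "\<dots> = (\<Sum>x\<in>{0..<int q}. (if int q dvd (z + x) then f x * of_nat q else 0))"
  proof (rule sum.cong[OF refl])
    fix x
    have "int q dvd (- (2 * a)) * (z + x) \<longleftrightarrow> int q dvd (z + x)"
      using coprime_dvd_mult_cancel[OF c, of "z + x"] by auto
    then show "f x * (\<Sum>y\<in>{0..<int q}. ez q (y * (- (2 * a) * (z + x)))) = (if int q dvd (z + x) then f x * of_nat q else 0)"
      using geom_sum[OF q, of "- (2 * a) * (z + x)"] by (simp add: mult.assoc)
  qed
  also have "\<dots> = f ((- z) mod int q) * of_nat q"
    using sum_delta_mod[OF q, of z "\<lambda>x. f x * of_nat q"] by simp
  also have "\<dots> = f (- z) * of_nat q" using periodic_mod[OF f] by simp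
  finally show "weil q a GenS (weil q a GenS f) z = sigma q a ^ 2 * f (- z)"
    using q cs_sq[of q] by (simp add: power2_eq_square field_simps)
qed


lemma sum_delta_cong:
  assumes q: "q > 0"
  shows "(\<Sum>x\<in>{0..<int q}. (if [x = b] (mod int q) then F x else 0)) = F (b mod int q)"
  using sum_delta_mod[OF q, of "- b" F]
  by (simp add: cong_iff_dvd_diff dvd_diff_commute add.commute)

declare of_nat_power [simp del] of_int_power[simp del]

locale wsetup =
  fixes p \<alpha> :: nat and a \<epsilon> :: int
  assumes p: "prime p" and podd: "odd p" and al: "\<alpha> \<ge> 1" and ca: "coprime a (int p)"
    and eps: "\<epsilon> \<in> {1, -1}"
begin

abbreviation "q \<equiv> p ^ \<alpha>"

lemma p_gt1: "p > 1" using p prime_gt_1_nat by blast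

lemma q_pos: "q > 0" using p_gt1 by simp

lemma q_gt1: "q > 1" using one_less_power[OF p_gt1, of \<alpha>] al by simp

lemma p_dvd_q: "int p dvd int q" using al by (simp add: dvd_power)

lemma pint: "prime (int p)" using p by simp

lemma cop_pow: "coprime x (int p) \<Longrightarrow> coprime x (int q)"
  by (simp add: of_nat_power coprime_power_right_iff)

lemma unit_iff: "coprime x (int p) \<longleftrightarrow> \<not> int p dvd x"
proof
  assume c: "coprime x (int p)" show "\<not> int p dvd x"
  proof
    assume "int p dvd x"
    then have "is_unit (int p)" using coprime_common_divisor[OF c, of "int p"] by simp
    then show False using pint not_prime_unit by blast
  qed
next
  assume "\<not> int p dvd x" then show "coprime x (int p)"
    using pint prime_imp_coprime coprime_commute by blast
qed

lemma unit_q: "\<not> int p dvd x \<Longrightarrow> coprime x (int q)"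
  using unit_iff cop_pow by blast

lemma cop2: "coprime 2 (int p)"
proof -
  have "\<not> int p dvd 2"
  proof
    assume "int p dvd 2"
    then have "p dvd 2" by presburger
    then have "p \<le> 2" by (simp add: dvd_imp_le)
    then show False using p_gt1 podd by (cases "p = 2") auto
  qed
  then show ?thesis using unit_iff by blast
qed

lemma cop2a: "coprime (2 * a) (int q)"
  using cop_pow cop2 ca by (simp add: coprime_mult_left_iff)

lemma cop2ax: "\<not> int p dvd x \<Longrightarrow> coprime (2 * a * x) (int q)"
  using cop2a unit_q by (simp add: coprime_mult_left_iff)

lemma eps_sq: "of_int \<epsilon> * (of_int \<epsilon> :: complex) = 1" using eps by auto

lemma eps_nz: "(of_int \<epsilon> :: complex) \<noteq> 0" using eps by auto

lemma dvd_cong_q: "[x = y] (mod int q) \<Longrightarrow> int p dvd x \<longleftrightarrow> int p dvd y"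
  using p_dvd_q by (metis cong_dvd_iff cong_dvd_modulus)

definition uvec :: "int \<Rightarrow> int \<Rightarrow> complex" where
  "uvec x0 = (\<lambda>y. (if [y = x0] (mod int q) then 1 else 0) + of_int \<epsilon> * (if [y = - x0] (mod int q) then 1 else 0))"

definition par :: "(int \<Rightarrow> complex) \<Rightarrow> bool" where
  "par f \<longleftrightarrow> (\<forall>x. f (- x) = of_int \<epsilon> * f x)"

lemma W1eps_iff: "f \<in> W1eps p \<alpha> \<epsilon> \<longleftrightarrow> periodic q f \<and> par f \<and> (\<alpha> \<ge> 2 \<longrightarrow> (\<forall>y. wip q f (incl p \<alpha> y) = 0))"
  by (auto simp: W1eps_def W1_def Wsp_periodic par_def fun_eq_iff)

lemma incl_supp: assumes "\<alpha> \<ge> 2" "incl p \<alpha> y x \<noteq> 0" shows "int p dvd x"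
proof -
  have "[x = int p * y] (mod int (p ^ (\<alpha> - 1)))" using assms(2) by (simp add: incl_def split: if_splits)
  moreover have "int p dvd int (p ^ (\<alpha> - 1))" using assms(1) by (simp add: dvd_power)
  ultimately have "[x = int p * y] (mod int p)" using cong_dvd_modulus by blast
  then show ?thesis by (simp add: cong_dvd_iff)
qed

lemma wip_unit_supp: assumes "\<alpha> \<ge> 2" "\<And>x. int p dvd x \<Longrightarrow> f x = 0" shows "wip q f (incl p \<alpha> y) = 0"
proof -
  have "f x * cnj (incl p \<alpha> y x) = 0" for x
    using incl_supp[OF assms(1), of y x] assms(2)[of x] by (cases "incl p \<alpha> y x = 0") auto
  then show ?thesis unfolding wip_def by (intro sum.neutral) auto
qed

lemma W1eps_unit: "periodic q f \<Longrightarrow> par f \<Longrightarrow> (\<And>x. int p dvd x \<Longrightarrow> f x = 0) \<Longrightarrow> f \<in> W1eps p \<alpha> \<epsilon>"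
  using wip_unit_supp by (auto simp: W1eps_iff)

lemma uvec_periodic: "periodic q (uvec x0)"
  by (simp add: periodic_def uvec_def congdef)

lemma uvec_par: "par (uvec x0)"
proof -
  have "uvec x0 (- x) = of_int \<epsilon> * uvec x0 x" for x
  proof -
    have 1: "[- x = x0] (mod int q) \<longleftrightarrow> [x = - x0] (mod int q)"
      by (metis cong_minus_minus_iff minus_minus)
    have 2: "[- x = - x0] (mod int q) \<longleftrightarrow> [x = x0] (mod int q)"
      by (simp add: cong_minus_minus_iff)
    show ?thesis using eps_sq by (simp add: uvec_def 1 2 algebra_simps)
  qed
  then show ?thesis by (simp add: par_def)
qed

lemma uvec_supp: "\<not> int p dvd x0 \<Longrightarrow> int p dvd x \<Longrightarrow> uvec x0 x = 0"
proof -
  assume "\<not> int p dvd x0" "int p dvd x"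
  then have "\<not> [x = x0] (mod int q)" "\<not> [x = - x0] (mod int q)"
    using dvd_cong_q by force+
  then show ?thesis by (simp add: uvec_def)
qed

lemma uvec_W1: "\<not> int p dvd x0 \<Longrightarrow> uvec x0 \<in> W1eps p \<alpha> \<epsilon>"
  using W1eps_unit uvec_periodic uvec_par uvec_supp by blast

lemma not_cong_neg: assumes "\<not> int p dvd x0" shows "\<not> [x0 = - x0] (mod int q)"
proof
  assume "[x0 = - x0] (mod int q)"
  then have "int q dvd 2 * x0" by (simp add: cong_iff_dvd_diff)
  then have "int p dvd 2 * x0" using p_dvd_q dvd_trans by blast
  then show False using assms cop2 by (metis coprime_commute coprime_dvd_mult_right_iff)
qed

lemma uvec_self: "\<not> int p dvd x0 \<Longrightarrow> uvec x0 x0 = 1"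
  using not_cong_neg by (simp add: uvec_def)

lemma uvec_nz: "\<not> int p dvd x0 \<Longrightarrow> uvec x0 \<noteq> (\<lambda>_. 0)"
  using uvec_self by (metis zero_neq_one)

lemma cs_smult: "csubspace U \<Longrightarrow> f \<in> U \<Longrightarrow> (\<lambda>x. c * f x) \<in> U"
  by (simp add: csubspace_def)

lemma cs_add: "csubspace U \<Longrightarrow> f \<in> U \<Longrightarrow> g \<in> U \<Longrightarrow> (\<lambda>x. f x + g x) \<in> U"
  by (simp add: csubspace_def)

lemma cs_sum: assumes "csubspace U" "finite I" "\<And>i. i \<in> I \<Longrightarrow> f i \<in> U" shows "(\<lambda>x. \<Sum>i\<in>I. c i * f i x) \<in> U"
  using assms(2,3)
proof (induction I rule: finite_induct)
  case empty then show ?case using assms(1) by (simp add: csubspace_def)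
next
  case (insert i I)
  then have "(\<lambda>x. c i * f i x + (\<Sum>i\<in>I. c i * f i x)) \<in> U"
    using cs_add cs_smult assms(1) by (metis insertCI)
  then show ?case using insert by simp
qed

lemma inv_act: "invariant (weil q a) U \<Longrightarrow> f \<in> U \<Longrightarrow> word_act (weil q a) w f \<in> U"
  by (simp add: invariant_def)

lemma inv_S: "invariant (weil q a) U \<Longrightarrow> f \<in> U \<Longrightarrow> weil q a GenS f \<in> U"
  using inv_act[of U f "[GenS]"] by simp

definition proj :: "int \<Rightarrow> (int \<Rightarrow> complex) \<Rightarrow> (int \<Rightarrow> complex)" where
  "proj c f = (\<lambda>x. \<Sum>k\<in>{0..<q}. (ez q (- (int k * c)) / of_nat q) * word_act (weil q a) (replicate k GenT) f x)"

lemma proj_in: "csubspace U \<Longrightarrow> invariant (weil q a) U \<Longrightarrow> f \<in> U \<Longrightarrow> proj c f \<in> U"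
  unfolding proj_def by (rule cs_sum) (auto intro: inv_act)

lemma proj_eq: "proj c f = (\<lambda>x. if int q dvd (a * x^2 - c) then f x else 0)"
proof
  fix x
  have e: "ez q (- (int k * c)) * ez q (int k * a * x^2) = ez q (int k * (a * x^2 - c))" for k
    by (simp add: eq_add[symmetric] algebra_simps)
  have "proj c f x = (\<Sum>k\<in>{0..<q}. ez q (int k * (a * x^2 - c)) * f x / of_nat q)"
    unfolding proj_def word_act_Tpow
    by (intro sum.cong refl) (simp only: e[symmetric], simp add: field_simps)
  also have "\<dots> = (\<Sum>k\<in>{0..<q}. ez q (int k * (a * x^2 - c))) * f x / of_nat q"
    by (simp add: sum_distrib_right sum_divide_distrib)
  finally have "proj c f x = (\<Sum>k\<in>{0..<q}. ez q (int k * (a * x^2 - c))) * f x / of_nat q" .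
  also have "(\<Sum>k\<in>{0..<q}. ez q (int k * (a * x^2 - c))) = (\<Sum>k\<in>{0..<int q}. ez q (k * (a * x^2 - c)))"
  proof -
    have "{0..<int q} = int ` {0..<q}" by (simp add: image_int_atLeastLessThan)
    then show ?thesis by (simp add: sum.reindex)
  qed
  also have "\<dots> = (if int q dvd (a * x^2 - c) then of_nat q else 0)" by (rule geom_sum[OF q_pos])
  finally show "proj c f x = (if int q dvd (a * x^2 - c) then f x else 0)" using q_pos by simp
qed

lemma sq_cong_unit:
  assumes "\<not> int p dvd x0"
  shows "int q dvd (a * y^2 - a * x0^2) \<longleftrightarrow> [y = x0] (mod int q) \<or> [y = - x0] (mod int q)"
proof
  assume h: "int q dvd (a * y^2 - a * x0^2)"
  have "a * y^2 - a * x0^2 = a * ((y - x0) * (y + x0))" by (simp add: power2_eq_square algebra_simps)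
  with h have "int q dvd (y - x0) * (y + x0)"
    using coprime_dvd_mult_cancel cop_pow ca by metis
  moreover have "\<not> (int p dvd (y - x0) \<and> int p dvd (y + x0))"
  proof
    assume "int p dvd (y - x0) \<and> int p dvd (y + x0)"
    then have "int p dvd (y + x0) - (y - x0)" using dvd_diff by blast
    then have "int p dvd 2 * x0" by (simp add: algebra_simps)
    then show False using assms cop2 by (metis coprime_commute coprime_dvd_mult_right_iff)
  qed
  ultimately have "int q dvd (y - x0) \<or> int q dvd (y + x0)"
  proof -
    assume d: "int q dvd (y - x0) * (y + x0)" and n: "\<not> (int p dvd (y - x0) \<and> int p dvd (y + x0))"
    show ?thesis
    proof (cases "int p dvd (y - x0)")
      case True
      then have "coprime (y + x0) (int q)" using n unit_q by blast
      then show ?thesis using d coprime_dvd_mult_cancel by (metis mult.commute)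
    next
      case False
      then have "coprime (y - x0) (int q)" using unit_q by blast
      then show ?thesis using d coprime_dvd_mult_cancel by metis
    qed
  qed
  then show "[y = x0] (mod int q) \<or> [y = - x0] (mod int q)" by (simp add: cong_iff_dvd_diff)
next
  assume "[y = x0] (mod int q) \<or> [y = - x0] (mod int q)"
  then have "int q dvd (y - x0) \<or> int q dvd (y + x0)" by (auto simp: cong_iff_dvd_diff)
  moreover have "a * y^2 - a * x0^2 = a * (y + x0) * (y - x0)" by (simp add: power2_eq_square algebra_simps)
  ultimately show "int q dvd (a * y^2 - a * x0^2)" by (metis dvd_mult dvd_mult2 mult.commute)
qed

lemma proj_unit:
  assumes x0: "\<not> int p dvd x0" and f: "periodic q f" "par f"
  shows "proj (a * x0^2) f = (\<lambda>y. f x0 * uvec x0 y)"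
proof
  fix y
  have nc: "\<not> ([y = x0] (mod int q) \<and> [y = - x0] (mod int q))"
    using not_cong_neg[OF x0] by (meson cong_sym cong_trans)
  have "f (- x0) = of_int \<epsilon> * f x0" using f(2) by (simp add: par_def)
  then show "proj (a * x0^2) f y = f x0 * uvec x0 y"
    using nc sq_cong_unit[OF x0, of y] periodic_cong[OF f(1), of y x0] periodic_cong[OF f(1), of y "- x0"]
    by (auto simp: proj_eq uvec_def)
qed

lemma par_S: assumes "periodic q f" "par f" shows "par (weil q a GenS f)"
proof -
  have "weil q a GenS f (- y) = of_int \<epsilon> * weil q a GenS f y" for y
  proof -
    have P: "periodic q (\<lambda>x. ez q (- (2 * a * y * x)) * f (- x))"
    proof -
      have "f (- (x + int q)) = f (- x)" for x
        using periodic_cong[OF assms(1), of "- (x + int q)" "- x"] by (simp add: congdef)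
      then show ?thesis using periodic_eq[OF q_pos, of "- (2 * a * y)"] by (simp add: periodic_def)
    qed
    have "(\<Sum>x\<in>{0..<int q}. ez q (- (2 * a * - y * x)) * f x) = (\<Sum>x\<in>{0..<int q}. ez q (- (2 * a * y * - x)) * f (- (- x)))"
      by simp
    also have "\<dots> = (\<Sum>x\<in>{0..<int q}. ez q (- (2 * a * y * x)) * f (- x))"
      by (rule sum_neg[OF q_pos P])
    also have "\<dots> = of_int \<epsilon> * (\<Sum>x\<in>{0..<int q}. ez q (- (2 * a * y * x)) * f x)"
      using assms(2) by (simp add: par_def sum_distrib_left algebra_simps)
    finally show ?thesis by (simp add: weilS algebra_simps)
  qed
  then show ?thesis by (simp add: par_def)
qed

lemma S_uvec: "weil q a GenS (uvec x0) = (\<lambda>y. sigma q a / cs q * (ez q (- (2 * a * y * x0)) + of_int \<epsilon> * ez q (2 * a * y * x0)))"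
proof
  fix y
  have P: "periodic q (\<lambda>x. ez q (- (2 * a * y * x)))"
    using periodic_eq[OF q_pos, of "- (2 * a * y)"] by simp
  have e: "ez q (- (2 * a * y * x)) * uvec x0 x = (if [x = x0] (mod int q) then ez q (- (2 * a * y * x)) else 0)
     + of_int \<epsilon> * (if [x = - x0] (mod int q) then ez q (- (2 * a * y * x)) else 0)" for x
    by (simp add: uvec_def algebra_simps)
  have "(\<Sum>x\<in>{0..<int q}. ez q (- (2 * a * y * x)) * uvec x0 x) =
     (\<Sum>x\<in>{0..<int q}. (if [x = x0] (mod int q) then ez q (- (2 * a * y * x)) else 0))
     + of_int \<epsilon> * (\<Sum>x\<in>{0..<int q}. (if [x = - x0] (mod int q) then ez q (- (2 * a * y * x)) else 0))"
    unfolding e by (simp add: sum.distrib sum_distrib_left)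
  also have "\<dots> = ez q (- (2 * a * y * (x0 mod int q))) + of_int \<epsilon> * ez q (- (2 * a * y * ((- x0) mod int q)))"
    by (simp only: sum_delta_cong[OF q_pos])
  also have "\<dots> = ez q (- (2 * a * y * x0)) + of_int \<epsilon> * ez q (2 * a * y * x0)"
    using periodic_mod[OF P, of x0] periodic_mod[OF P, of "- x0"] by simp
  finally show "weil q a GenS (uvec x0) y = sigma q a / cs q * (ez q (- (2 * a * y * x0)) + of_int \<epsilon> * ez q (2 * a * y * x0))"
    by (simp add: weilS)
qed

lemma coef_nz: assumes "\<not> int p dvd y" "\<not> int p dvd x0"
  shows "ez q (- (2 * a * y * x0)) + of_int \<epsilon> * ez q (2 * a * y * x0) \<noteq> 0"
proof
  let ?m = "2 * a * y * x0"
  assume h: "ez q (- ?m) + of_int \<epsilon> * ez q ?m = 0"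
  have "ez q ?m * (ez q (- ?m) + of_int \<epsilon> * ez q ?m) = 1 + of_int \<epsilon> * ez q (2 * ?m)"
    by (simp add: eq_add[symmetric] algebra_simps mult_2)
  with h have "of_int \<epsilon> * ez q (2 * ?m) = -1" by (simp add: algebra_simps add_eq_0_iff)
  then have "(of_int \<epsilon> * ez q (2 * ?m)) * (of_int \<epsilon> * ez q (2 * ?m)) = 1" by simp
  then have "(of_int \<epsilon> * of_int \<epsilon>) * (ez q (2 * ?m) * ez q (2 * ?m)) = 1" by (simp only: ac_simps)
  then have "ez q (2 * ?m) * ez q (2 * ?m) = 1" using eps_sq by simp
  then have "ez q (2 * ?m + 2 * ?m) = 1" by (simp only: eq_add)
  then have "int q dvd 2 * ?m + 2 * ?m" using eq_1_iff[OF q_pos] by blast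
  then have "int q dvd 8 * (a * (y * x0))" by (simp add: ac_simps)
  then have d: "int p dvd 8 * (a * (y * x0))" using p_dvd_q dvd_trans by blast
  have c8: "coprime ((2::int)^3) (int p)" using cop2 by (simp only: coprime_power_left_iff) simp
  then have c8': "coprime (8::int) (int p)" by simp
  have "coprime y (int p)" "coprime x0 (int p)" using assms unit_iff by auto
  then have "coprime (8 * (a * (y * x0))) (int p)"
    using c8' ca by (simp add: coprime_mult_left_iff)
  then show False using d unit_iff by blast
qed

end


context wsetup begin

lemma W1_periodic: "f \<in> W1eps p \<alpha> \<epsilon> \<Longrightarrow> periodic q f" by (simp add: W1eps_iff)
lemma W1_par: "f \<in> W1eps p \<alpha> \<epsilon> \<Longrightarrow> par f" by (simp add: W1eps_iff)

lemma S_periodic: "periodic q f \<Longrightarrow> periodic q (weil q a GenS f)"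
  using weil_periodic[OF q_pos] by blast

lemma all_units:
  assumes U: "csubspace U" "invariant (weil q a) U" and x0: "uvec x0 \<in> U" "\<not> int p dvd x0"
    and y: "\<not> int p dvd y"
  shows "uvec y \<in> U"
proof -
  let ?g = "weil q a GenS (uvec x0)"
  have g: "?g \<in> U" using inv_S[OF U(2) x0(1)] .
  have gp: "periodic q ?g" using S_periodic uvec_periodic by blast
  have gpar: "par ?g" using par_S uvec_periodic uvec_par by blast
  have "proj (a * y^2) ?g \<in> U" using proj_in[OF U g] .
  then have 1: "(\<lambda>z. ?g y * uvec y z) \<in> U" using proj_unit[OF y gp gpar] by simp
  have "?g y \<noteq> 0"
    using sigma_nz[OF q_pos cop2a] cs_nz[OF q_pos] coef_nz[OF y x0(2)] by (simp add: S_uvec)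
  then have "(\<lambda>z. inverse (?g y) * (?g y * uvec y z)) = uvec y" by (simp add: fun_eq_iff)
  then show ?thesis using cs_smult[OF U(1) 1, of "inverse (?g y)"] by simp
qed

definition units :: "int set" where "units = {x0 \<in> {0..<int q}. \<not> int p dvd x0}"

lemma units_fin: "finite units"
  by (rule finite_subset[of _ "{0..<int q}"]) (auto simp: units_def)

lemma sum_units: "(\<Sum>x0\<in>units. h x0) = (\<Sum>x0\<in>{0..<int q}. if \<not> int p dvd x0 then h x0 else 0)"
  unfolding units_def by (rule sum.inter_filter) simp

lemma unit_part:
  assumes f: "periodic q f" "par f"
  shows "(\<lambda>x. if int p dvd x then 0 else f x) = (\<lambda>x. \<Sum>x0\<in>units. (f x0 / 2) * uvec x0 x)"
proof
  fix x
  have A: "(\<Sum>x0\<in>units. (if [x0 = x] (mod int q) then f x0 else 0)) = (if int p dvd x then 0 else f x)"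
  proof -
    have "(\<Sum>x0\<in>units. (if [x0 = x] (mod int q) then f x0 else 0)) =
          (\<Sum>x0\<in>{0..<int q}. if [x0 = x] (mod int q) then (if int p dvd x then 0 else f x0) else 0)"
      unfolding sum_units by (intro sum.cong refl) (auto dest: dvd_cong_q)
    also have "\<dots> = (if int p dvd x then 0 else f (x mod int q))" by (rule sum_delta_cong[OF q_pos])
    finally show ?thesis using periodic_mod[OF f(1)] by simp
  qed
  have B: "(\<Sum>x0\<in>units. (if [x0 = - x] (mod int q) then f x0 else 0)) = (if int p dvd x then 0 else of_int \<epsilon> * f x)"
  proof -
    have "(\<Sum>x0\<in>units. (if [x0 = - x] (mod int q) then f x0 else 0)) =
          (\<Sum>x0\<in>{0..<int q}. if [x0 = - x] (mod int q) then (if int p dvd x then 0 else f x0) else 0)"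
      unfolding sum_units by (intro sum.cong refl) (auto dest: dvd_cong_q)
    also have "\<dots> = (if int p dvd x then 0 else f ((- x) mod int q))" by (rule sum_delta_cong[OF q_pos])
    finally show ?thesis using periodic_mod[OF f(1)] f(2) by (simp add: par_def)
  qed
  have C: "[x = x0] (mod int q) \<longleftrightarrow> [x0 = x] (mod int q)" "[x = - x0] (mod int q) \<longleftrightarrow> [x0 = - x] (mod int q)" for x0
    by (auto simp: cong_sym_eq) (metis cong_minus_minus_iff minus_minus cong_sym)+
  have D: "(f x0 / 2) * uvec x0 x = ((if [x0 = x] (mod int q) then f x0 else 0) + of_int \<epsilon> * (if [x0 = - x] (mod int q) then f x0 else 0)) / 2" for x0
    using C[of x0] by (auto simp: uvec_def algebra_simps cong_sym_eq)
  have "(\<Sum>x0\<in>units. (f x0 / 2) * uvec x0 x) =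
      ((\<Sum>x0\<in>units. (if [x0 = x] (mod int q) then f x0 else 0)) + of_int \<epsilon> * (\<Sum>x0\<in>units. (if [x0 = - x] (mod int q) then f x0 else 0))) / 2"
    unfolding D by (simp add: sum_divide_distrib[symmetric] sum.distrib sum_distrib_left)
  also have "\<dots> = (if int p dvd x then 0 else f x)" using A B eps_sq by (simp add: algebra_simps)
  finally show "(if int p dvd x then 0 else f x) = (\<Sum>x0\<in>units. (f x0 / 2) * uvec x0 x)" by simp
qed

lemma unit_supp_in:
  assumes U: "csubspace U" and allu: "\<And>y. \<not> int p dvd y \<Longrightarrow> uvec y \<in> U"
    and h: "periodic q h" "par h" "\<And>x. int p dvd x \<Longrightarrow> h x = 0"
  shows "h \<in> U"
proof -
  have "h = (\<lambda>x. if int p dvd x then 0 else h x)" using h(3) by auto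
  also have "\<dots> = (\<lambda>x. \<Sum>x0\<in>units. (h x0 / 2) * uvec x0 x)" by (rule unit_part[OF h(1,2)])
  finally have e: "h = (\<lambda>x. \<Sum>x0\<in>units. (h x0 / 2) * uvec x0 x)" .
  have "(\<lambda>x. \<Sum>x0\<in>units. (h x0 / 2) * uvec x0 x) \<in> U"
    by (rule cs_sum[OF U units_fin]) (use allu in \<open>auto simp: units_def\<close>)
  then show ?thesis using e by simp
qed

end


context wsetup begin

lemma q_split: "\<alpha> \<ge> 2 \<Longrightarrow> int q = int (p ^ (\<alpha> - 1)) * int p"
  by (metis One_nat_def Suc_diff_le Suc_le_lessD diff_Suc_1 le_add_diff_inverse2 numeral_2_eq_2
      of_nat_mult power_Suc2 less_imp_le_nat)

lemma p_dvd_m: "\<alpha> \<ge> 2 \<Longrightarrow> int p dvd int (p ^ (\<alpha> - 1))"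
  by (simp add: dvd_power)

lemma m_pos: "int (p ^ (\<alpha> - 1)) > 0" using p_gt1 by simp

lemma inner_zero:
  assumes a2: "\<alpha> \<ge> 2" and g: "g \<in> W1eps p \<alpha> \<epsilon>" and gs: "\<And>x. \<not> int p dvd x \<Longrightarrow> g x = 0"
    and r: "r \<in> {0..<int (p ^ (\<alpha> - 1))}"
  shows "(\<Sum>t\<in>{0..<int p}. g (r + int (p ^ (\<alpha> - 1)) * t)) = 0"
proof (cases "int p dvd r")
  case False
  have "\<not> int p dvd r + int (p ^ (\<alpha> - 1)) * t" for t
    using False p_dvd_m[OF a2] by (metis dvd_add_left_iff dvd_mult2)
  then show ?thesis using gs by simp
next
  case True
  let ?m = "int (p ^ (\<alpha> - 1))"
  let ?y = "r div int p"
  have ry: "int p * ?y = r" using True by simp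
  have "wip q g (incl p \<alpha> ?y) = 0" using g a2 by (simp add: W1eps_iff)
  moreover have "wip q g (incl p \<alpha> ?y) = (\<Sum>t\<in>{0..<int p}. g (r + ?m * t))"
  proof -
    have "wip q g (incl p \<alpha> ?y) = (\<Sum>x\<in>{0..<?m * int p}. g x * cnj (incl p \<alpha> ?y x))"
      unfolding wip_def q_split[OF a2] ..
    also have "\<dots> = (\<Sum>r'\<in>{0..<?m}. \<Sum>t\<in>{0..<int p}. g (r' + ?m * t) * cnj (incl p \<alpha> ?y (r' + ?m * t)))"
      by (rule sum_split) (use m_pos p_gt1 in auto)
    also have "\<dots> = (\<Sum>r'\<in>{0..<?m}. if r' = r then (\<Sum>t\<in>{0..<int p}. g (r + ?m * t)) else 0)"
    proof (intro sum.cong refl)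
      fix r' assume r': "r' \<in> {0..<?m}"
      have "incl p \<alpha> ?y (r' + ?m * t) = (if r' = r then 1 else 0)" for t
      proof -
        have "[r' + ?m * t = int p * ?y] (mod ?m) \<longleftrightarrow> [r' = r] (mod ?m)"
          using ry by (simp add: congdef)
        also have "\<dots> \<longleftrightarrow> r' = r" using r r' by (auto intro: cong_less_imp_eq_int)
        finally show ?thesis by (simp add: incl_def)
      qed
      then show "(\<Sum>t\<in>{0..<int p}. g (r' + ?m * t) * cnj (incl p \<alpha> ?y (r' + ?m * t))) =
          (if r' = r then (\<Sum>t\<in>{0..<int p}. g (r + ?m * t)) else 0)" by simp
    qed
    also have "\<dots> = (\<Sum>t\<in>{0..<int p}. g (r + ?m * t))" using r by (simp add: sum.delta)
    finally show ?thesis .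
  qed
  ultimately show ?thesis by simp
qed

lemma S_pZ_zero:
  assumes a2: "\<alpha> \<ge> 2" and g: "g \<in> W1eps p \<alpha> \<epsilon>" and gs: "\<And>x. \<not> int p dvd x \<Longrightarrow> g x = 0"
    and y: "int p dvd y"
  shows "weil q a GenS g y = 0"
proof -
  let ?m = "int (p ^ (\<alpha> - 1))"
  from y obtain y1 where y1: "y = int p * y1" by auto
  have e: "ez q (- (2 * a * y * (r + ?m * t))) = ez q (- (2 * a * y * r))" for r t
  proof (rule eq_cong[OF q_pos])
    have "- (2 * a * y * (r + ?m * t)) - (- (2 * a * y * r)) = int q * (- (2 * a * y1 * t))"
      using q_split[OF a2] y1 by (simp add: algebra_simps)
    then show "[- (2 * a * y * (r + ?m * t)) = - (2 * a * y * r)] (mod int q)"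
      by (simp add: cong_iff_dvd_diff)
  qed
  have "(\<Sum>x\<in>{0..<int q}. ez q (- (2 * a * y * x)) * g x) =
        (\<Sum>x\<in>{0..<?m * int p}. ez q (- (2 * a * y * x)) * g x)" unfolding q_split[OF a2] ..
  also have "\<dots> = (\<Sum>r\<in>{0..<?m}. \<Sum>t\<in>{0..<int p}. ez q (- (2 * a * y * (r + ?m * t))) * g (r + ?m * t))"
    by (rule sum_split) (use m_pos p_gt1 in auto)
  also have "\<dots> = (\<Sum>r\<in>{0..<?m}. ez q (- (2 * a * y * r)) * (\<Sum>t\<in>{0..<int p}. g (r + ?m * t)))"
    by (simp only: e sum_distrib_left)
  also have "\<dots> = 0" using inner_zero[OF a2 g gs] by simp
  finally show ?thesis by (simp add: weilS)
qed

lemma S_inv_smult: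
  assumes f: "periodic q f" "par f"
  shows "weil q a GenS (weil q a GenS f) = (\<lambda>z. sigma q a ^ 2 * of_int \<epsilon> * f z)"
proof -
  have "f (- z) = of_int \<epsilon> * f z" for z using f(2) by (simp add: par_def)
  then show ?thesis using weil_S2[OF q_pos cop2a f(1)] by (simp add: fun_eq_iff mult.assoc)
qed

lemma from_S2:
  assumes U: "csubspace U" "invariant (weil q a) U" and f: "periodic q f" "par f"
    and h: "weil q a GenS f \<in> U"
  shows "f \<in> U"
proof -
  have "weil q a GenS (weil q a GenS f) \<in> U" using inv_S[OF U(2) h] .
  then have 1: "(\<lambda>z. sigma q a ^ 2 * of_int \<epsilon> * f z) \<in> U" using S_inv_smult[OF f] by simp
  obtain c where c: "c = sigma q a ^ 2 * of_int \<epsilon>" by blast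
  have nz: "c \<noteq> 0" using sigma_nz[OF q_pos cop2a] eps_nz c by simp
  have "(\<lambda>z. inverse c * (c * f z)) = f"
    using nz by (simp add: fun_eq_iff)
  then show ?thesis using cs_smult[OF U(1) 1[folded c], of "inverse c"] by simp
qed

lemma pZ_in_U:
  assumes a2: "\<alpha> \<ge> 2" and U: "csubspace U" "invariant (weil q a) U"
    and allu: "\<And>y. \<not> int p dvd y \<Longrightarrow> uvec y \<in> U"
    and g: "g \<in> W1eps p \<alpha> \<epsilon>" and gs: "\<And>x. \<not> int p dvd x \<Longrightarrow> g x = 0"
  shows "g \<in> U"
proof -
  have gp: "periodic q g" "par g" using g W1_periodic W1_par by auto
  have "weil q a GenS g \<in> U"
    using unit_supp_in[OF U(1) allu S_periodic[OF gp(1)] par_S[OF gp] S_pZ_zero[OF a2 g gs]] by blast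
  then show ?thesis using from_S2[OF U gp] by blast
qed

lemma split_parts: fixes f :: "int \<Rightarrow> complex" shows
  "f = (\<lambda>x. (if int p dvd x then 0 else f x) + (if int p dvd x then f x else 0))" by (rule ext) simp

lemma periodic_if: assumes "periodic q f" shows "periodic q (\<lambda>x. if int p dvd x then 0 else f x)" "periodic q (\<lambda>x. if int p dvd x then f x else 0)"
proof -
  have "int p dvd x + int q \<longleftrightarrow> int p dvd x" for x using p_dvd_q by (simp add: dvd_add_left_iff)
  then show "periodic q (\<lambda>x. if int p dvd x then 0 else f x)" "periodic q (\<lambda>x. if int p dvd x then f x else 0)"
    using assms by (auto simp: periodic_def)
qed

lemma par_if: assumes "par f" shows "par (\<lambda>x. if int p dvd x then 0 else f x)" "par (\<lambda>x. if int p dvd x then f x else 0)"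
  using assms by (auto simp: par_def)

lemma V_sub_U:
  assumes U: "csubspace U" "invariant (weil q a) U"
    and allu: "\<And>y. \<not> int p dvd y \<Longrightarrow> uvec y \<in> U"
    and f: "f \<in> W1eps p \<alpha> \<epsilon>"
  shows "f \<in> U"
proof -
  have fp: "periodic q f" "par f" using f W1_periodic W1_par by auto
  let ?u = "\<lambda>x. if int p dvd x then 0 else f x"
  let ?g = "\<lambda>x. if int p dvd x then f x else 0"
  have u: "?u \<in> U" by (rule unit_supp_in[OF U(1) allu periodic_if(1)[OF fp(1)] par_if(1)[OF fp(2)]]) auto
  have g: "?g \<in> U"
  proof (cases "\<alpha> \<ge> 2")
    case True
    have "wip q ?g (incl p \<alpha> y) = wip q f (incl p \<alpha> y)" for y
      unfolding wip_def by (intro sum.cong refl) (use incl_supp[OF True] in force)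
    then have "?g \<in> W1eps p \<alpha> \<epsilon>" using f periodic_if(2)[OF fp(1)] par_if(2)[OF fp(2)] by (simp add: W1eps_iff)
    then show ?thesis using pZ_in_U[OF True U allu] by auto
  next
    case False
    then have a1: "\<alpha> = 1" using al by simp
    then have qp: "q = p" by simp
    have g0: "?g = (\<lambda>x. f 0 * (if int p dvd x then 1 else 0))"
    proof
      fix x show "?g x = f 0 * (if int p dvd x then 1 else 0)"
        using periodic_cong[OF fp(1), of x 0] qp by (auto simp: cong_iff_dvd_diff)
    qed
    show ?thesis
    proof (cases "f 0 = 0")
      case True
      then have "?g = (\<lambda>x. 0)" using g0 by simp
      then show ?thesis using U(1) by (simp add: csubspace_def)
    next
      case False
      have "f 0 = of_int \<epsilon> * f 0" using fp(2) par_def by (metis minus_zero)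
      then have e1: "\<epsilon> = 1" using False eps by auto
      let ?h = "weil q a GenS (uvec 1)"
      have hU: "?h \<in> U" using inv_S[OF U(2) allu[of 1]] p_gt1 by (simp add: zdvd1_eq)
      have hp: "periodic q ?h" using S_periodic uvec_periodic by blast
      have "?h 0 = sigma q a / cs q * (1 + of_int \<epsilon>)" by (simp add: S_uvec)
      then have h0: "?h 0 = sigma q a / cs q * 2" using e1 by simp
      have "proj 0 ?h = (\<lambda>y. ?h 0 * (if int p dvd y then 1 else 0))"
      proof
        fix y
        have "int q dvd a * y^2 \<longleftrightarrow> int p dvd y"
        proof -
          have "int p dvd a * y^2 \<longleftrightarrow> int p dvd y^2" using ca unit_iff
            by (metis coprime_commute coprime_dvd_mult_right_iff)
          also have "\<dots> \<longleftrightarrow> int p dvd y" using pint prime_dvd_power_iff by (metis zero_less_numeral)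
          finally show ?thesis using qp by simp
        qed
        moreover have "int p dvd y \<Longrightarrow> ?h y = ?h 0"
          using periodic_cong[OF hp, of y 0] qp by (simp add: cong_iff_dvd_diff)
        ultimately show "proj 0 ?h y = ?h 0 * (if int p dvd y then 1 else 0)" by (simp add: proj_eq)
      qed
      moreover have "proj 0 ?h \<in> U" using proj_in[OF U hU] .
      ultimately have 1: "(\<lambda>y. ?h 0 * (if int p dvd y then 1 else 0)) \<in> U" by simp
      have nz: "?h 0 \<noteq> 0" using h0 sigma_nz[OF q_pos cop2a] cs_nz[OF q_pos] by simp
      have "?g = (\<lambda>y. (f 0 / ?h 0) * (?h 0 * (if int p dvd y then 1 else 0)))"
        using g0 nz by (simp add: fun_eq_iff)
      then show ?thesis using cs_smult[OF U(1) 1, of "f 0 / ?h 0"] by simp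
    qed
  qed
  have "(\<lambda>x. ?u x + ?g x) \<in> U" using cs_add[OF U(1) u g] .
  then show ?thesis using split_parts[of f] by simp
qed

lemma from_nz:
  assumes U: "csubspace U" "invariant (weil q a) U" and h: "h \<in> U" "periodic q h" "par h"
    and x: "\<not> int p dvd x" "h x \<noteq> 0"
  shows "uvec x \<in> U"
proof -
  have "proj (a * x^2) h \<in> U" using proj_in[OF U h(1)] .
  then have 1: "(\<lambda>y. h x * uvec x y) \<in> U" using proj_unit[OF x(1) h(2,3)] by simp
  have "(\<lambda>y. inverse (h x) * (h x * uvec x y)) = uvec x" using x(2) by (simp add: fun_eq_iff)
  then show ?thesis using cs_smult[OF U(1) 1, of "inverse (h x)"] by simp
qed

lemma first_step:
  assumes U: "csubspace U" "invariant (weil q a) U" "U \<subseteq> W1eps p \<alpha> \<epsilon>" "U \<noteq> {\<lambda>_. 0}"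
  shows "\<exists>x0. \<not> int p dvd x0 \<and> uvec x0 \<in> U"
proof -
  have "(\<lambda>_. 0) \<in> U" using U(1) by (simp add: csubspace_def)
  then obtain f where f: "f \<in> U" "f \<noteq> (\<lambda>_. 0)" using U(4) by blast
  have fV: "f \<in> W1eps p \<alpha> \<epsilon>" using f U(3) by blast
  have fp: "periodic q f" "par f" using fV W1_periodic W1_par by auto
  show ?thesis
  proof (cases "\<exists>x. \<not> int p dvd x \<and> f x \<noteq> 0")
    case True
    then obtain x where "\<not> int p dvd x" "f x \<noteq> 0" by blast
    then show ?thesis using from_nz[OF U(1,2) f(1) fp] by blast
  next
    case False
    then have fs: "\<And>x. \<not> int p dvd x \<Longrightarrow> f x = 0" by blast
    let ?g = "weil q a GenS f"
    have gU: "?g \<in> U" using inv_S[OF U(2) f(1)] .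
    have gp: "periodic q ?g" "par ?g" using S_periodic[OF fp(1)] par_S[OF fp] by auto
    have "\<exists>y. \<not> int p dvd y \<and> ?g y \<noteq> 0"
    proof (cases "\<alpha> \<ge> 2")
      case True
      have "?g \<noteq> (\<lambda>_. 0)"
      proof
        assume "?g = (\<lambda>_. 0)"
        then have "weil q a GenS ?g = (\<lambda>_. 0)" by (simp add: weil_zero)
        then have "(\<lambda>z. sigma q a ^ 2 * of_int \<epsilon> * f z) = (\<lambda>_. 0)" using S_inv_smult[OF fp] by simp
        then have "f = (\<lambda>_. 0)" using sigma_nz[OF q_pos cop2a] eps_nz by (simp add: fun_eq_iff)
        then show False using f(2) by simp
      qed
      then obtain y where "?g y \<noteq> 0" by auto
      moreover have "\<not> int p dvd y" using S_pZ_zero[OF True fV fs] calculation by blast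
      ultimately show ?thesis by blast
    next
      case False
      then have "\<alpha> = 1" using al by simp
      then have qp: "q = p" by simp
      obtain x where x: "f x \<noteq> 0" using f(2) by auto
      then have "int p dvd x" using fs by blast
      then have f0: "f 0 \<noteq> 0" using x periodic_cong[OF fp(1), of x 0] qp by (simp add: cong_iff_dvd_diff)
      have "(\<Sum>x\<in>{0..<int q}. ez q (- (2 * a * 1 * x)) * f x) = (\<Sum>x\<in>{0..<int q}. if x = 0 then f 0 else 0)"
      proof (intro sum.cong refl)
        fix x assume "x \<in> {0..<int q}"
        then have "x \<noteq> 0 \<Longrightarrow> \<not> int p dvd x" using qp by (auto simp: zdvd_not_zless)
        then show "ez q (- (2 * a * 1 * x)) * f x = (if x = 0 then f 0 else 0)" using fs by auto
      qed
      also have "\<dots> = f 0" using q_pos by simp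
      finally have "?g 1 = sigma q a / cs q * f 0" by (simp add: weilS)
      then have "?g 1 \<noteq> 0" using f0 sigma_nz[OF q_pos cop2a] cs_nz[OF q_pos] by simp
      moreover have "\<not> int p dvd 1" using p_gt1 by (simp add: zdvd1_eq)
      ultimately show ?thesis by blast
    qed
    then obtain y where "\<not> int p dvd y" "?g y \<noteq> 0" by blast
    then show ?thesis using from_nz[OF U(1,2) gU gp] by blast
  qed
qed

theorem irreducible: "irreducible_mod (weil q a) (W1eps p \<alpha> \<epsilon>)"
proof -
  have n1: "\<not> int p dvd 1" using p_gt1 by (simp add: zdvd1_eq)
  have "W1eps p \<alpha> \<epsilon> \<noteq> {\<lambda>_. 0}" using uvec_W1[OF n1] uvec_nz[OF n1] by auto
  moreover have "U = {\<lambda>_. 0} \<or> U = W1eps p \<alpha> \<epsilon>"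
    if U: "csubspace U" "U \<subseteq> W1eps p \<alpha> \<epsilon>" "invariant (weil q a) U" for U
  proof (cases "U = {\<lambda>_. 0}")
    case False
    obtain x0 where x0: "\<not> int p dvd x0" "uvec x0 \<in> U" using first_step[OF U(1,3,2) False] by blast
    have allu: "uvec y \<in> U" if "\<not> int p dvd y" for y using all_units[OF U(1,3) x0(2,1) that] .
    have "W1eps p \<alpha> \<epsilon> \<subseteq> U" using V_sub_U[OF U(1,3) allu] by blast
    then show ?thesis using U(2) by blast
  qed simp
  ultimately show ?thesis by (auto simp: irreducible_mod_def)
qed

theorem minimal:
  assumes N: "N > 0" and G: "Gamma_trivial (weil q a) (W1eps p \<alpha> \<epsilon>) N"
  shows "q \<le> N"
proof -
  have n1: "\<not> int p dvd 1" using p_gt1 by (simp add: zdvd1_eq)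
  have "in_Gamma N (word_mat (replicate N GenT))" by (simp add: word_mat_Tpow in_Gamma_def congdef)
  then have "word_act (weil q a) (replicate N GenT) (uvec 1) = uvec 1"
    using G uvec_W1[OF n1] by (auto simp: Gamma_trivial_def)
  then have "ez q (int N * a * 1^2) * uvec 1 1 = uvec 1 1" by (metis word_act_Tpow)
  then have "ez q (int N * a) = 1" using uvec_self[OF n1] by simp
  then have "int q dvd int N * a" using eq_1_iff[OF q_pos] by blast
  then have "int q dvd int N" using coprime_dvd_mult_cancel cop_pow ca by (metis mult.commute)
  then have "q dvd N" by presburger
  then show ?thesis using N by (rule dvd_imp_le)
qed

end


lemma gs_cong: assumes "q > 0" "[c = c'] (mod int q)" shows "gs q c = gs q c'"
proof -
  have "ez q (c * x^2) = ez q (c' * x^2)" for x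
    using assms by (intro eq_cong) (auto intro: cong_mult)
  then show ?thesis by (simp add: gs_def)
qed

lemma gs_sq_unit: assumes q: "q > 0" and x: "coprime x (int q)" shows "gs q (c * x^2) = gs q c"
proof -
  have "gs q (c * x^2) = (\<Sum>y\<in>{0..<int q}. ez q (c * (x * y + 0)^2))"
    by (simp add: gs_def power_mult_distrib algebra_simps)
  also have "\<dots> = gs q c" unfolding gs_def by (rule sum_affine[OF q periodic_eq_sq[OF q] x])
  finally show ?thesis .
qed

lemma sigma_sq_unit: assumes q: "q > 0" and x: "coprime x (int q)" and c: "[a' = a * x^2] (mod int q)"
  shows "sigma q a' = sigma q a"
proof -
  have "[- a' = (- a) * x^2] (mod int q)" using c by (metis cong_minus_minus_iff minus_mult_left)
  then have "gs q (- a') = gs q (- a)" using gs_cong[OF q] gs_sq_unit[OF q x] by metis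
  then show ?thesis by (simp add: sigma_gs)
qed

lemma hensel:
  fixes p :: nat and u :: int
  assumes p: "prime p" "odd p" and u: "\<not> int p dvd u" and x: "[u = x^2] (mod int p)" and k: "k \<ge> 1"
  shows "\<exists>z. [u = z^2] (mod int (p ^ k))"
  using k
proof (induction k rule: dec_induct)
  case base then show ?case using x by auto
next
  case (step k)
  then obtain z where z: "[u = z^2] (mod int (p ^ k))" by blast
  then obtain s where s: "u - z^2 = int (p ^ k) * s" by (metis cong_iff_dvd_diff dvd_def)
  have pint: "prime (int p)" using p by simp
  have zu: "\<not> int p dvd z"
  proof
    assume "int p dvd z"
    then have "int p dvd z^2" by (simp add: power2_eq_square)
    moreover have "int p dvd u - z^2" using s step(1) by (simp add: dvd_power of_nat_power)
    ultimately show False using u by (metis dvd_diff_commute dvd_add_left_iff diff_add_cancel)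
  qed
  have c2z: "coprime (2 * z) (int p)"
  proof -
    have "\<not> int p dvd 2"
    proof
      assume "int p dvd 2" then have "p dvd 2" by presburger
      then have "p \<le> 2" by (simp add: dvd_imp_le)
      then show False using p prime_gt_1_nat[of p] by (cases "p = 2") auto
    qed
    then have "\<not> int p dvd 2 * z" using zu pint by (simp add: prime_dvd_mult_iff)
    then show ?thesis using pint prime_imp_coprime coprime_commute by blast
  qed
  then obtain w where w: "[(2 * z) * w = 1] (mod int p)"
    using coprime_iff_invertible_int by blast
  let ?t = "s * w"
  let ?z' = "z + int (p ^ k) * ?t"
  have "u - ?z'^2 = int (p ^ k) * (s - 2 * z * ?t) - int (p ^ k) * int (p ^ k) * ?t^2"
    using s by (simp add: power2_eq_square algebra_simps)
  moreover have "int p dvd s - 2 * z * ?t"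
  proof -
    have "[s * ((2 * z) * w) = s * 1] (mod int p)" using w by (rule cong_scalar_left)
    then show ?thesis by (simp add: cong_iff_dvd_diff algebra_simps dvd_diff_commute)
  qed
  ultimately have "int (p ^ Suc k) dvd u - ?z'^2"
  proof -
    assume e: "u - ?z'^2 = int (p ^ k) * (s - 2 * z * ?t) - int (p ^ k) * int (p ^ k) * ?t^2"
      and d: "int p dvd s - 2 * z * ?t"
    have 1: "int (p ^ Suc k) dvd int (p ^ k) * (s - 2 * z * ?t)"
      using d by (simp add: of_nat_power mult.commute mult_dvd_mono)
    have "int p ^ Suc k dvd int p ^ (k + k)" by (rule le_imp_power_dvd) (use step(1) in simp)
    then have "int (p ^ Suc k) dvd int (p ^ k) * int (p ^ k)"
      by (simp add: of_nat_power power_add[symmetric])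
    then have 2: "int (p ^ Suc k) dvd int (p ^ k) * int (p ^ k) * ?t^2" by (rule dvd_mult2)
    show ?thesis using e 1 2 by (simp add: dvd_diff)
  qed
  then show ?case by (auto simp: cong_iff_dvd_diff)
qed


context wsetup begin

lemma Tk_uvec: "word_act (weil q a) (replicate k GenT) (uvec x0) = (\<lambda>x. ez q (int k * a * x0^2) * uvec x0 x)"
proof
  fix x
  show "word_act (weil q a) (replicate k GenT) (uvec x0) x = ez q (int k * a * x0^2) * uvec x0 x"
  proof (cases "uvec x0 x = 0")
    case True then show ?thesis by (simp add: word_act_Tpow)
  next
    case False
    then have "[x = x0] (mod int q) \<or> [x = - x0] (mod int q)" by (auto simp: uvec_def split: if_splits)
    then have "[x^2 = x0^2] (mod int q)" by (metis cong_pow power2_eq_square minus_mult_minus)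
    then have "ez q (int k * a * x^2) = ez q (int k * a * x0^2)"
      by (intro eq_cong[OF q_pos]) (auto intro: cong_mult)
    then show ?thesis by (simp add: word_act_Tpow)
  qed
qed

lemma Tq_id: "word_act (weil q a) (replicate q GenT) f = f"
proof -
  have "ez q (int q * a * x^2) = 1" for x using eq_mult_q[OF q_pos, of "a * x^2"] by (simp add: mult.assoc)
  then show ?thesis by (simp add: word_act_Tpow)
qed

lemma scale_in_V:
  assumes d: "coprime d (int q)" and f: "f \<in> W1eps p \<alpha> \<epsilon>"
  shows "(\<lambda>y. f (d * y)) \<in> W1eps p \<alpha> \<epsilon>"
proof -
  have fp: "periodic q f" "par f" using f W1_periodic W1_par by auto
  have P: "periodic q (\<lambda>y. f (d * y))"
    unfolding periodic_def using periodic_cong[OF fp(1)] by (auto simp: cong_iff_dvd_diff algebra_simps)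
  have Q: "par (\<lambda>y. f (d * y))" using fp(2) by (simp add: par_def)
  have R: "wip q (\<lambda>y. f (d * y)) (incl p \<alpha> y) = 0" if a2: "\<alpha> \<ge> 2" for y
  proof -
    let ?m = "int (p ^ (\<alpha> - 1))"
    have dm: "coprime d ?m"
    proof -
      have "?m dvd int q" using q_split[OF a2] by simp
      then show ?thesis using d by (meson coprime_commute coprime_divisors dvd_refl)
    qed
    have inc: "incl p \<alpha> y x = incl p \<alpha> (d * y) (d * x)" for x
    proof -
      have "[d * x = int p * (d * y)] (mod ?m) \<longleftrightarrow> [d * x = d * (int p * y)] (mod ?m)" by (simp add: ac_simps)
      also have "\<dots> \<longleftrightarrow> [x = int p * y] (mod ?m)" using cong_mult_lcancel[OF dm] by blast
      finally show ?thesis by (simp add: incl_def)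
    qed
    let ?F = "\<lambda>z. f z * cnj (incl p \<alpha> (d * y) z)"
    have Fp: "periodic q ?F"
    proof -
      have "incl p \<alpha> (d * y) (z + int q) = incl p \<alpha> (d * y) z" for z
      proof -
        have "?m dvd int q" using q_split[OF a2] by simp
        then have "[z + int q = z] (mod ?m)" by (simp add: cong_iff_dvd_diff)
        then show ?thesis unfolding incl_def by (metis (full_types) cong_trans cong_sym)
      qed
      then show ?thesis using fp(1) by (simp add: periodic_def)
    qed
    have "wip q (\<lambda>y. f (d * y)) (incl p \<alpha> y) = (\<Sum>x\<in>{0..<int q}. ?F (d * x + 0))"
      unfolding wip_def using inc by simp
    also have "\<dots> = wip q f (incl p \<alpha> (d * y))" unfolding wip_def by (rule sum_affine[OF q_pos Fp d])
    also have "\<dots> = 0" using f a2 by (simp add: W1eps_iff)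
    finally show ?thesis .
  qed
  show ?thesis using P Q R by (simp add: W1eps_iff)
qed

end

lemma scale_weil:
  assumes A: "wsetup p \<alpha> a \<epsilon>" and c: "coprime c (int (p ^ \<alpha>))" and ac: "[a' = a * c^2] (mod int (p ^ \<alpha>))"
    and f: "periodic (p ^ \<alpha>) f"
  shows "(\<lambda>y. weil (p ^ \<alpha>) a g f (c * y)) = weil (p ^ \<alpha>) a' g (\<lambda>y. f (c * y))"
proof -
  interpret A: wsetup p \<alpha> a \<epsilon> by (rule A)
  show ?thesis
  proof (cases g)
    case GenT
    have "ez A.q (a * (c * y)^2) = ez A.q (a' * y^2)" for y
    proof (rule eq_cong[OF A.q_pos])
      have "[a * c^2 * y^2 = a' * y^2] (mod int A.q)" using ac by (intro cong_mult) (auto simp: cong_sym_eq)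
      then show "[a * (c * y)^2 = a' * y^2] (mod int A.q)" by (simp add: power_mult_distrib ac_simps)
    qed
    then show ?thesis using GenT by (simp add: weilT fun_eq_iff)
  next
    case GenS
    have sg: "sigma A.q a' = sigma A.q a" by (rule sigma_sq_unit[OF A.q_pos c ac])
    have "(\<Sum>x\<in>{0..<int A.q}. ez A.q (- (2 * a' * y * x)) * f (c * x)) = (\<Sum>x\<in>{0..<int A.q}. ez A.q (- (2 * a * (c * y) * x)) * f x)" for y
    proof -
      let ?F = "\<lambda>z. ez A.q (- (2 * a * (c * y) * z)) * f z"
      have Fp: "periodic A.q ?F" using f periodic_eq[OF A.q_pos, of "- (2 * a * (c * y))"] by (simp add: periodic_def)
      have "ez A.q (- (2 * a' * y * x)) = ez A.q (- (2 * a * (c * y) * (c * x + 0)))" for x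
      proof (rule eq_cong[OF A.q_pos])
        have "[2 * a' * y * x = 2 * (a * c^2) * y * x] (mod int A.q)" using ac by (intro cong_mult cong_refl)
        then show "[- (2 * a' * y * x) = - (2 * a * (c * y) * (c * x + 0))] (mod int A.q)"
          by (simp add: cong_minus_minus_iff power2_eq_square ac_simps)
      qed
      then have "(\<Sum>x\<in>{0..<int A.q}. ez A.q (- (2 * a' * y * x)) * f (c * x)) = (\<Sum>x\<in>{0..<int A.q}. ?F (c * x + 0))"
        by simp
      also have "\<dots> = (\<Sum>x\<in>{0..<int A.q}. ?F x)" by (rule sum_affine[OF A.q_pos Fp c])
      finally show ?thesis .
    qed
    then show ?thesis using GenS sg by (simp add: weilS fun_eq_iff)
  qed
qed

lemma scale_word:
  assumes A: "wsetup p \<alpha> a \<epsilon>" and c: "coprime c (int (p ^ \<alpha>))" and ac: "[a' = a * c^2] (mod int (p ^ \<alpha>))"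
    and f: "periodic (p ^ \<alpha>) f"
  shows "(\<lambda>y. word_act (weil (p ^ \<alpha>) a) w f (c * y)) = word_act (weil (p ^ \<alpha>) a') w (\<lambda>y. f (c * y))"
proof (induction w)
  case Nil then show ?case by simp
next
  case (Cons g w)
  interpret A: wsetup p \<alpha> a \<epsilon> by (rule A)
  have "periodic A.q (word_act (weil A.q a) w f)" using word_act_periodic[OF A.q_pos f] .
  then have "(\<lambda>y. weil A.q a g (word_act (weil A.q a) w f) (c * y)) = weil A.q a' g (\<lambda>y. word_act (weil A.q a) w f (c * y))"
    by (rule scale_weil[OF A c ac])
  then show ?case using Cons by simp
qed


lemma iso_rev:
  assumes A: "wsetup p \<alpha> a \<epsilon>" and B: "wsetup p \<alpha> a' \<epsilon>" and x: "[a * a' = x^2] (mod int p)"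
  shows "iso_mod (weil (p ^ \<alpha>) a) (W1eps p \<alpha> \<epsilon>) (weil (p ^ \<alpha>) a') (W1eps p \<alpha> \<epsilon>)"
proof -
  interpret A: wsetup p \<alpha> a \<epsilon> by (rule A)
  interpret B: wsetup p \<alpha> a' \<epsilon> by (rule B)
  have u: "\<not> int p dvd a * a'"
    using A.ca B.ca A.unit_iff A.pint by (simp add: prime_dvd_mult_iff)
  obtain z where z: "[a * a' = z^2] (mod int A.q)" using hensel[OF A.p A.podd u x A.al] by blast
  obtain ai where ai: "[a * ai = 1] (mod int A.q)"
    using A.cop_pow[OF A.ca] coprime_iff_invertible_int A.q_pos by (metis of_nat_0_less_iff)
  have zu: "coprime z (int A.q)"
  proof -
    have "coprime (a * a') (int A.q)" using A.cop_pow A.ca B.ca by (simp add: coprime_mult_left_iff)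
    then have "coprime (z^2) (int A.q)" using z by (metis cong_imp_coprime)
    then show ?thesis by simp
  qed
  have aiu: "coprime ai (int A.q)" using ai by (metis coprime_iff_invertible_int cong_sym coprime_commute
      cong_imp_coprime coprime_1_left coprime_mult_left_iff)
  let ?c = "z * ai"
  have cu: "coprime ?c (int A.q)" using zu aiu by simp
  have ac: "[a' = a * ?c^2] (mod int A.q)"
  proof -
    have "[a * ?c^2 = a * (a * a') * ai^2] (mod int A.q)"
    proof -
      have "[a * z^2 * ai^2 = a * (a * a') * ai^2] (mod int A.q)" using z by (intro cong_mult cong_refl) (simp add: cong_sym_eq)
      then show ?thesis by (simp add: power_mult_distrib ac_simps)
    qed
    also have "a * (a * a') * ai^2 = a' * (a * ai)^2" by (simp add: power2_eq_square ac_simps)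
    also have "[a' * (a * ai)^2 = a' * 1^2] (mod int A.q)" using ai by (intro cong_mult cong_refl cong_pow)
    finally show ?thesis by (simp add: cong_sym_eq)
  qed
  obtain ci where ci: "[?c * ci = 1] (mod int A.q)"
    using cu coprime_iff_invertible_int A.q_pos by (metis of_nat_0_less_iff)
  have ciu: "coprime ci (int A.q)" using ci by (metis coprime_iff_invertible_int cong_sym coprime_commute
      cong_imp_coprime coprime_1_left coprime_mult_left_iff)
  let ?\<phi> = "\<lambda>f. (\<lambda>y. f (?c * y))"
  let ?\<psi> = "\<lambda>f. (\<lambda>y. f (ci * y))"
  have bij: "bij_betw ?\<phi> (W1eps p \<alpha> \<epsilon>) (W1eps p \<alpha> \<epsilon>)"
  proof (rule bij_betwI[where g = ?\<psi>])
    show "?\<phi> \<in> W1eps p \<alpha> \<epsilon> \<rightarrow> W1eps p \<alpha> \<epsilon>" using A.scale_in_V[OF cu] by blast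
    show "?\<psi> \<in> W1eps p \<alpha> \<epsilon> \<rightarrow> W1eps p \<alpha> \<epsilon>" using A.scale_in_V[OF ciu] by blast
    show "?\<psi> (?\<phi> f) = f" if "f \<in> W1eps p \<alpha> \<epsilon>" for f
    proof
      fix y
      have "[?c * (ci * y) = 1 * y] (mod int A.q)" using ci by (metis cong_scalar_right mult.assoc)
      then show "?\<psi> (?\<phi> f) y = f y" using periodic_cong[OF A.W1_periodic[OF that]] by simp
    qed
    show "?\<phi> (?\<psi> f) = f" if "f \<in> W1eps p \<alpha> \<epsilon>" for f
    proof
      fix y
      have "[ci * (?c * y) = 1 * y] (mod int A.q)" using ci by (metis cong_scalar_right mult.assoc mult.commute)
      then show "?\<phi> (?\<psi> f) y = f y" using periodic_cong[OF A.W1_periodic[OF that]] by simp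
    qed
  qed
  show ?thesis unfolding iso_mod_def
  proof (intro exI[of _ ?\<phi>] conjI bij ballI allI)
    fix w f assume "f \<in> W1eps p \<alpha> \<epsilon>"
    then show "?\<phi> (word_act (weil A.q a) w f) = word_act (weil A.q a') w (?\<phi> f)"
      using scale_word[OF A cu ac A.W1_periodic] by blast
  qed auto
qed

lemma iso_fwd:
  assumes A: "wsetup p \<alpha> a \<epsilon>" and B: "wsetup p \<alpha>' a' \<epsilon>'"
    and I: "iso_mod (weil (p ^ \<alpha>) a) (W1eps p \<alpha> \<epsilon>) (weil (p ^ \<alpha>') a') (W1eps p \<alpha>' \<epsilon>')"
  shows "p ^ \<alpha> = p ^ \<alpha>' \<and> \<epsilon> = \<epsilon>' \<and> (\<exists>x. [a * a' = x ^ 2] (mod int p))"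
proof -
  interpret A: wsetup p \<alpha> a \<epsilon> by (rule A)
  interpret B: wsetup p \<alpha>' a' \<epsilon>' by (rule B)
  obtain \<phi> where bij: "bij_betw \<phi> (W1eps p \<alpha> \<epsilon>) (W1eps p \<alpha>' \<epsilon>')"
    and sm: "\<And>c f. f \<in> W1eps p \<alpha> \<epsilon> \<Longrightarrow> \<phi> (\<lambda>x. c * f x) = (\<lambda>x. c * \<phi> f x)"
    and eqv: "\<And>w f. f \<in> W1eps p \<alpha> \<epsilon> \<Longrightarrow> \<phi> (word_act (weil A.q a) w f) = word_act (weil B.q a') w (\<phi> f)"
    using I unfolding iso_mod_def by blast
  have n1: "\<not> int p dvd 1" using A.p_gt1 by (simp add: zdvd1_eq)
  let ?f1 = "A.uvec 1"
  have f1: "?f1 \<in> W1eps p \<alpha> \<epsilon>" using A.uvec_W1[OF n1] .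
  let ?g = "\<phi> ?f1"
  have gV: "?g \<in> W1eps p \<alpha>' \<epsilon>'" using bij f1 by (auto simp: bij_betw_def)
  have zV: "(\<lambda>_. 0) \<in> W1eps p \<alpha> \<epsilon>" by (simp add: A.W1eps_iff A.par_def periodic_def wip_def)
  have phi0: "\<phi> (\<lambda>_. 0) = (\<lambda>_. 0)" using sm[OF f1, of 0] by simp
  have gnz: "?g \<noteq> (\<lambda>_. 0)"
  proof
    assume "?g = (\<lambda>_. 0)"
    then have "\<phi> ?f1 = \<phi> (\<lambda>_. 0)" using phi0 by simp
    then have "?f1 = (\<lambda>_. 0)" using bij f1 zV by (auto simp: bij_betw_def inj_on_def)
    then show False using A.uvec_nz[OF n1] by simp
  qed
  then obtain x0 where x0: "?g x0 \<noteq> 0" by auto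
  have "\<phi> (word_act (weil A.q a) (replicate B.q GenT) ?f1) = word_act (weil B.q a') (replicate B.q GenT) ?g"
    using eqv[OF f1] .
  then have "\<phi> (\<lambda>x. ez A.q (int B.q * a) * ?f1 x) = ?g"
    using A.Tk_uvec B.Tq_id by simp
  then have "(\<lambda>x. ez A.q (int B.q * a) * ?g x) = ?g" using sm[OF f1] by simp
  then have "ez A.q (int B.q * a) = 1" using x0 by (metis mult_cancel_right2)
  then have "int A.q dvd int B.q * a" using eq_1_iff[OF A.q_pos] by blast
  then have d1: "int A.q dvd int B.q" using coprime_dvd_mult_cancel A.cop_pow A.ca by (metis mult.commute)
  have g1: "B.uvec 1 \<in> W1eps p \<alpha>' \<epsilon>'" using B.uvec_W1[OF n1] .
  then have "B.uvec 1 \<in> \<phi> ` W1eps p \<alpha> \<epsilon>" using bij by (simp add: bij_betw_def)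
  then obtain f where f: "f \<in> W1eps p \<alpha> \<epsilon>" "\<phi> f = B.uvec 1" by (metis imageE)
  have "\<phi> (word_act (weil A.q a) (replicate A.q GenT) f) = word_act (weil B.q a') (replicate A.q GenT) (B.uvec 1)"
    using eqv[OF f(1)] f(2) by simp
  then have "B.uvec 1 = (\<lambda>x. ez B.q (int A.q * a' * 1^2) * B.uvec 1 x)" using A.Tq_id f(2) B.Tk_uvec by simp
  then have "B.uvec 1 1 = ez B.q (int A.q * a') * B.uvec 1 1" by (metis power_one mult_1_right)
  then have "ez B.q (int A.q * a') = 1" using B.uvec_self[OF n1] by simp
  then have "int B.q dvd int A.q * a'" using eq_1_iff[OF B.q_pos] by blast
  then have d2: "int B.q dvd int A.q" using coprime_dvd_mult_cancel B.cop_pow B.ca by (metis mult.commute)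
  have qq: "A.q = B.q" using d1 d2 by (simp add: dvd_antisym)
  have "\<phi> (word_act (weil A.q a) [GenT] ?f1) = word_act (weil B.q a') [GenT] ?g" using eqv[OF f1] .
  then have "\<phi> (\<lambda>x. ez A.q (int 1 * a * 1^2) * ?f1 x) = weil B.q a' GenT ?g"
    using A.Tk_uvec[of 1 1] by simp
  then have "(\<lambda>x. ez A.q a * ?g x) = (\<lambda>x. ez B.q (a' * x^2) * ?g x)" using sm[OF f1] by (simp add: weilT)
  then have "ez A.q a = ez A.q (a' * x0^2)" using x0 qq by (metis mult_cancel_right)
  then have cg: "[a = a' * x0^2] (mod int A.q)" using eq_eq_iff[OF A.q_pos] by blast
  then have "[a * a' = (a' * x0)^2] (mod int A.q)"
    by (metis cong_scalar_right power2_eq_square mult.assoc mult.commute power_mult_distrib)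
  then have sq: "[a * a' = (a' * x0)^2] (mod int p)" using A.p_dvd_q cong_dvd_modulus by blast
  have x0u: "coprime x0 (int A.q)"
  proof -
    have "\<not> int p dvd x0"
    proof
      assume "int p dvd x0"
      then have "int p dvd a' * x0^2" by (simp add: power2_eq_square)
      moreover have "[a = a' * x0^2] (mod int p)" using cg A.p_dvd_q cong_dvd_modulus by blast
      ultimately have "int p dvd a" using cong_dvd_iff by blast
      then show False using A.ca A.unit_iff by blast
    qed
    then show ?thesis using A.unit_q by blast
  qed
  have sg: "sigma A.q a = sigma A.q a'" using sigma_sq_unit[OF A.q_pos x0u cg] .
  have "\<phi> (word_act (weil A.q a) [GenS, GenS] ?f1) = word_act (weil B.q a') [GenS, GenS] ?g" using eqv[OF f1] .
  moreover have "word_act (weil A.q a) [GenS, GenS] ?f1 = (\<lambda>z. sigma A.q a ^ 2 * of_int \<epsilon> * ?f1 z)"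
    using A.S_inv_smult[OF A.uvec_periodic A.uvec_par] by simp
  moreover have "word_act (weil B.q a') [GenS, GenS] ?g = (\<lambda>z. sigma B.q a' ^ 2 * of_int \<epsilon>' * ?g z)"
    using B.S_inv_smult B.W1_periodic[OF gV] B.W1_par[OF gV] by simp
  ultimately have "(\<lambda>z. sigma A.q a ^ 2 * of_int \<epsilon> * ?g z) = (\<lambda>z. sigma B.q a' ^ 2 * of_int \<epsilon>' * ?g z)"
    using sm[OF f1] by simp
  then have "sigma A.q a ^ 2 * of_int \<epsilon> = sigma A.q a ^ 2 * of_int \<epsilon>'" using x0 qq sg by (metis mult_cancel_right)
  then have "\<epsilon> = \<epsilon>'" using sigma_nz[OF A.q_pos A.cop2a] by simp
  then show ?thesis using qq sq by blast
qed


declare of_nat_power [simp del] of_int_power [simp del]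


locale oprime =
  fixes p :: nat
  assumes p: "prime p" and podd: "odd p"
begin

lemma pint: "prime (int p)" using p by simp
lemma p_gt2: "p > 2" using p podd prime_gt_1_nat[OF p] by (cases "p = 2") auto
lemma p_pos: "p > 0" using p_gt2 by simp

lemma unit_iff: "coprime x (int p) \<longleftrightarrow> \<not> int p dvd x"
proof
  assume c: "coprime x (int p)" show "\<not> int p dvd x"
  proof
    assume "int p dvd x"
    then have "is_unit (int p)" using coprime_common_divisor[OF c, of "int p"] by simp
    then show False using pint not_prime_unit by blast
  qed
next
  assume "\<not> int p dvd x" then show "coprime x (int p)"
    using pint prime_imp_coprime coprime_commute by blast
qed

lemma dvd_mult_iff: "int p dvd x * y \<longleftrightarrow> int p dvd x \<or> int p dvd y"
  using pint by (simp add: prime_dvd_mult_iff)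

lemma inv_unit: assumes "[x * y = 1] (mod int p)" shows "\<not> int p dvd y"
proof
  assume "int p dvd y"
  then have "int p dvd x * y" by simp
  then have "int p dvd 1" using assms cong_dvd_iff by blast
  then show False using p_gt2 by simp
qed

definition QR :: "int \<Rightarrow> bool" where "QR c \<longleftrightarrow> (\<exists>s. [c = s^2] (mod int p))"

lemma QR_gs: assumes "\<not> int p dvd c" "QR c" shows "gs p c = gs p 1"
proof -
  obtain s where s: "[c = s^2] (mod int p)" using assms(2) by (auto simp: QR_def)
  have "\<not> int p dvd s"
  proof
    assume "int p dvd s" then have "int p dvd s^2" by (simp add: power2_eq_square)
    then show False using s assms(1) cong_dvd_iff by blast
  qed
  then have "coprime s (int p)" using unit_iff by blast
  then have "gs p (1 * s^2) = gs p 1" by (rule gs_sq_unit[OF p_pos])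
  moreover have "gs p c = gs p (1 * s^2)" using gs_cong[OF p_pos s] by simp
  ultimately show ?thesis by simp
qed

lemma inv_ex: "\<not> int p dvd x \<Longrightarrow> \<exists>y. [x * y = 1] (mod int p)"
  using unit_iff coprime_iff_invertible_int p_pos by (metis of_nat_0_less_iff)

lemma legendre_vals: "\<not> int p dvd x \<Longrightarrow> Legendre x (int p) = (if QR x then 1 else -1)"
proof -
  assume "\<not> int p dvd x"
  then have "\<not> [x = 0] (mod int p)" by (simp add: cong_0_iff)
  moreover have "QuadRes (int p) x \<longleftrightarrow> QR x" by (auto simp: QuadRes_def QR_def cong_sym_eq)
  ultimately show ?thesis by (simp add: Legendre_def)
qed

lemma not_dvd_2: "\<not> int p dvd 2"
proof
  assume "int p dvd 2"
  then have "p dvd 2" by presburger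
  then have "p \<le> 2" by (rule dvd_imp_le) simp
  then show False using p_gt2 by simp
qed

lemma m1_ne_1: "\<not> [-1 = 1] (mod int p)"
proof
  assume "[-1 = 1] (mod int p)"
  then have "int p dvd 2" by (simp add: cong_iff_dvd_diff)
  then show False using not_dvd_2 by blast
qed

lemma nr_mult:
  assumes x: "\<not> int p dvd x" "\<not> QR x" and y: "\<not> int p dvd y" "\<not> QR y"
  shows "QR (x * y)"
proof -
  let ?k = "(p - 1) div 2"
  have ex: "[-1 = x ^ ?k] (mod int p)" using euler_criterion[OF p p_gt2, of x] legendre_vals[OF x(1)] x(2) by simp
  have ey: "[-1 = y ^ ?k] (mod int p)" using euler_criterion[OF p p_gt2, of y] legendre_vals[OF y(1)] y(2) by simp
  have "[(-1) * (-1) = x ^ ?k * y ^ ?k] (mod int p)" using ex ey by (rule cong_mult)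
  then have e1: "[1 = (x * y) ^ ?k] (mod int p)" by (simp add: power_mult_distrib)
  have xy: "\<not> int p dvd x * y" using x y dvd_mult_iff by blast
  have "[Legendre (x * y) (int p) = (x * y) ^ ?k] (mod int p)" using euler_criterion[OF p p_gt2] .
  then have "[Legendre (x * y) (int p) = 1] (mod int p)" using e1 by (metis cong_sym cong_trans)
  then show ?thesis using legendre_vals[OF xy] m1_ne_1 by (auto split: if_splits)
qed

lemma qr_nr_mult:
  assumes x: "\<not> int p dvd x" "QR x" and n: "\<not> int p dvd n" "\<not> QR n"
  shows "\<not> QR (n * x)"
proof
  assume "QR (n * x)"
  then obtain s where s: "[n * x = s^2] (mod int p)" by (auto simp: QR_def)
  obtain t where t: "[x = t^2] (mod int p)" using x(2) by (auto simp: QR_def)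
  have "\<not> int p dvd t"
  proof
    assume "int p dvd t" then have "int p dvd t^2" by (simp add: power2_eq_square)
    then show False using t x(1) cong_dvd_iff by blast
  qed
  then obtain ti where ti: "[t * ti = 1] (mod int p)" using inv_ex by blast
  have "[n * x * ti^2 = s^2 * ti^2] (mod int p)" using s by (intro cong_mult cong_refl)
  moreover have "[n * x * ti^2 = n * (t * ti)^2] (mod int p)"
  proof -
    have "[n * x * ti^2 = n * t^2 * ti^2] (mod int p)" using t by (intro cong_mult cong_refl)
    then show ?thesis by (simp add: power_mult_distrib ac_simps)
  qed
  moreover have "[n * (t * ti)^2 = n * 1^2] (mod int p)" using ti by (intro cong_mult cong_refl cong_pow)
  ultimately have "[n = (s * ti)^2] (mod int p)"
    by (simp add: power_mult_distrib) (meson cong_sym cong_trans)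
  then show False using n(2) by (auto simp: QR_def)
qed

lemma NR_gs: assumes c: "\<not> int p dvd c" "\<not> QR c" and n: "\<not> int p dvd n" "\<not> QR n"
  shows "gs p c = gs p n"
proof -
  obtain ni where ni: "[n * ni = 1] (mod int p)" using inv_ex[OF n(1)] by blast
  have "QR (c * n)" using nr_mult[OF c n] .
  then obtain s where s: "[c * n = s^2] (mod int p)" by (auto simp: QR_def)
  have niu: "\<not> int p dvd ni" using inv_unit[OF ni] .
  have "\<not> int p dvd s"
  proof
    assume "int p dvd s" then have "int p dvd s^2" by (simp add: power2_eq_square)
    then have "int p dvd c * n" using s cong_dvd_iff by blast
    then show False using c(1) n(1) dvd_mult_iff by blast
  qed
  then have su: "coprime (s * ni) (int p)" using niu unit_iff dvd_mult_iff by blast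
  have "[c = n * (s * ni)^2] (mod int p)"
  proof -
    have "[n * (s * ni)^2 = (c * n) * ni^2 * n] (mod int p)"
    proof -
      have "[s^2 * ni^2 * n = (c * n) * ni^2 * n] (mod int p)" using s by (intro cong_mult cong_refl) (simp add: cong_sym_eq)
      then show ?thesis by (simp add: power_mult_distrib ac_simps)
    qed
    also have "(c * n) * ni^2 * n = c * (n * ni)^2" by (simp add: power2_eq_square ac_simps)
    also have "[c * (n * ni)^2 = c * 1^2] (mod int p)" using ni by (intro cong_mult cong_refl cong_pow)
    finally show ?thesis by (simp add: cong_sym_eq)
  qed
  then have "gs p c = gs p (n * (s * ni)^2)" using gs_cong[OF p_pos] by blast
  also have "\<dots> = gs p n" by (rule gs_sq_unit[OF p_pos su])
  finally show ?thesis .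
qed

lemma gs_0: "gs p 0 = of_nat p" by (simp add: gs_def)

lemma sum_gs: "(\<Sum>c\<in>{0..<int p}. gs p c) = of_nat p"
proof -
  have "(\<Sum>c\<in>{0..<int p}. gs p c) = (\<Sum>x\<in>{0..<int p}. \<Sum>c\<in>{0..<int p}. ez p (c * x^2))"
    unfolding gs_def by (rule sum.swap)
  also have "\<dots> = (\<Sum>x\<in>{0..<int p}. if int p dvd (0 + x) then of_nat p else 0)"
  proof (intro sum.cong refl)
    fix x
    have "int p dvd x^2 \<longleftrightarrow> int p dvd x" using dvd_mult_iff by (simp add: power2_eq_square)
    then show "(\<Sum>c\<in>{0..<int p}. ez p (c * x^2)) = (if int p dvd (0 + x) then of_nat p else 0)"
      using geom_sum[OF p_pos, of "x^2"] by simp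
  qed
  also have "\<dots> = of_nat p" using sum_delta_mod[OF p_pos, of 0 "\<lambda>_. of_nat p"] by simp
  finally show ?thesis .
qed

lemma gs_periodic: "periodic p (gs p)"
  unfolding periodic_def by (intro allI gs_cong[OF p_pos]) (simp add: congdef)

lemma NR_neg: assumes n: "\<not> int p dvd n" "\<not> QR n" shows "gs p n = - gs p 1"
proof -
  have nu: "coprime n (int p)" using n unit_iff by blast
  have "(\<Sum>c\<in>{0..<int p}. gs p (n * c + 0)) = (\<Sum>c\<in>{0..<int p}. gs p c)"
    by (rule sum_affine[OF p_pos gs_periodic nu])
  then have "(\<Sum>c\<in>{0..<int p}. gs p c + gs p (n * c)) = 2 * of_nat p"
    using sum_gs by (simp add: sum.distrib)
  moreover have "(\<Sum>c\<in>{0..<int p}. gs p c + gs p (n * c)) = 2 * of_nat p + of_nat (p - 1) * (gs p 1 + gs p n)"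
  proof -
    have split: "{0..<int p} = insert 0 {1..<int p}" using p_pos by auto
    have "(\<Sum>c\<in>{1..<int p}. gs p c + gs p (n * c)) = (\<Sum>c\<in>{1..<int p}. gs p 1 + gs p n)"
    proof (intro sum.cong refl)
      fix c assume "c \<in> {1..<int p}"
      then have cu: "\<not> int p dvd c" by (auto simp: zdvd_not_zless)
      have ncu: "\<not> int p dvd n * c" using cu n(1) dvd_mult_iff by blast
      show "gs p c + gs p (n * c) = gs p 1 + gs p n"
      proof (cases "QR c")
        case True
        then show ?thesis using QR_gs[OF cu True] NR_gs[OF ncu qr_nr_mult[OF cu True n] n] by simp
      next
        case False
        have "QR (n * c)" using nr_mult[OF n cu False] .
        then show ?thesis using QR_gs[OF ncu] NR_gs[OF cu False n] by simp
      qed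
    qed
    also have "\<dots> = of_nat (p - 1) * (gs p 1 + gs p n)"
      using p_pos by (simp add: of_nat_diff)
    finally show ?thesis using split gs_0 by simp
  qed
  ultimately have "of_nat (p - 1) * (gs p 1 + gs p n) = 0" by simp
  then show ?thesis using p_gt2 by (simp add: add_eq_0_iff)
qed

lemma gs_K: assumes x: "\<not> int p dvd x" and y: "\<not> int p dvd y"
  shows "gs p x * gs p y = gs p 1 * gs p (x * y)"
proof (cases "QR x")
  case True
  have "QR (y * x) \<or> \<not> QR (y * x)" by blast
  obtain s where s: "[x = s^2] (mod int p)" using True by (auto simp: QR_def)
  have "\<not> int p dvd s"
  proof
    assume "int p dvd s" then have "int p dvd s^2" by (simp add: power2_eq_square)
    then show False using s x cong_dvd_iff by blast
  qed
  then have su: "coprime s (int p)" using unit_iff by blast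
  have "gs p (x * y) = gs p (y * s^2)" using gs_cong[OF p_pos] s by (metis cong_scalar_left mult.commute)
  also have "\<dots> = gs p y" by (rule gs_sq_unit[OF p_pos su])
  finally show ?thesis using QR_gs[OF x True] by simp
next
  case xn: False
  show ?thesis
  proof (cases "QR y")
    case True
    obtain s where s: "[y = s^2] (mod int p)" using True by (auto simp: QR_def)
    have "\<not> int p dvd s"
    proof
      assume "int p dvd s" then have "int p dvd s^2" by (simp add: power2_eq_square)
      then show False using s y cong_dvd_iff by blast
    qed
    then have su: "coprime s (int p)" using unit_iff by blast
    have "gs p (x * y) = gs p (x * s^2)" using gs_cong[OF p_pos] s by (metis cong_scalar_left)
    also have "\<dots> = gs p x" by (rule gs_sq_unit[OF p_pos su])
    finally show ?thesis using QR_gs[OF y True] by simp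
  next
    case yn: False
    have xy: "\<not> int p dvd x * y" using x y dvd_mult_iff by blast
    show ?thesis using NR_neg[OF x xn] NR_neg[OF y yn] QR_gs[OF xy nr_mult[OF x xn y yn]] by simp
  qed
qed

lemma gs_cnj: "cnj (gs p c) = gs p (- c)"
  by (simp add: gs_def cnj_sum eq_cnj)

lemma gs_1m1: "gs p 1 * gs p (-1) = of_nat p"
proof -
  have "coprime (2 * 1) (int p)" using unit_iff not_dvd_2 by simp
  then show ?thesis using gs_norm_sq[OF p_pos, of 1] gs_cnj[of 1] by simp
qed

end


lemma dsum: fixes c :: complex shows "(\<Sum>y\<in>Y. A y * (c * (\<Sum>x\<in>X. B x y * f x))) = c * (\<Sum>x\<in>X. f x * (\<Sum>y\<in>Y. A y * B x y))"
proof -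
  have e: "A y * (c * (\<Sum>x\<in>X. B x y * f x)) = c * (\<Sum>x\<in>X. A y * B x y * f x)" for y
  proof -
    have "A y * (c * (\<Sum>x\<in>X. B x y * f x)) = c * (A y * (\<Sum>x\<in>X. B x y * f x))" by (rule mult.left_commute)
    also have "A y * (\<Sum>x\<in>X. B x y * f x) = (\<Sum>x\<in>X. A y * (B x y * f x))" by (rule sum_distrib_left)
    finally show ?thesis by (simp only: mult.assoc)
  qed
  have "(\<Sum>y\<in>Y. A y * (c * (\<Sum>x\<in>X. B x y * f x))) = c * (\<Sum>y\<in>Y. \<Sum>x\<in>X. A y * B x y * f x)"
    by (simp add: sum_distrib_left ac_simps)
  also have "(\<Sum>y\<in>Y. \<Sum>x\<in>X. A y * B x y * f x) = (\<Sum>x\<in>X. \<Sum>y\<in>Y. A y * B x y * f x)" by (rule sum.swap)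
  also have "\<dots> = (\<Sum>x\<in>X. f x * (\<Sum>y\<in>Y. A y * B x y))"
  proof (intro sum.cong refl)
    fix x show "(\<Sum>y\<in>Y. A y * B x y * f x) = f x * (\<Sum>y\<in>Y. A y * B x y)"
      by (simp only: sum_distrib_left mult.commute[of "f x"])
  qed
  finally show ?thesis .
qed

lemma ez_dvd: "q > 0 \<Longrightarrow> int q dvd X - Y \<Longrightarrow> ez q X = ez q Y"
  by (rule eq_cong) (simp_all add: cong_iff_dvd_diff)

locale pcase = oprime +
  fixes a :: int
  assumes ca: "coprime a (int p)"
begin

lemma au: "\<not> int p dvd a" using ca unit_iff by blast

definition gn :: "int \<Rightarrow> complex" where "gn c = gs p c / cs p"

definition minv :: "int \<Rightarrow> int" where "minv x = (SOME y. [x * y = 1] (mod int p))"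

lemma minv_cong: "\<not> int p dvd x \<Longrightarrow> [x * minv x = 1] (mod int p)"
  unfolding minv_def using inv_ex by (rule someI_ex)

lemma minv_eq: assumes "\<not> int p dvd x" obtains k where "x * minv x = 1 + int p * k"
proof -
  have "int p dvd x * minv x - 1" using minv_cong[OF assms] by (simp add: cong_iff_dvd_diff)
  then obtain k where "x * minv x - 1 = int p * k" by blast
  then have "x * minv x = 1 + int p * k" by (simp add: algebra_simps)
  then show ?thesis by (rule that)
qed

lemma minv_u: "\<not> int p dvd x \<Longrightarrow> \<not> int p dvd minv x" using minv_cong inv_unit by blast

lemma cs_sq_p: "cs p * cs p = of_nat p" by (rule cs_sq)

lemma gn_cong: "[c = c'] (mod int p) \<Longrightarrow> gn c = gn c'"
  using gs_cong[OF p_pos] by (simp add: gn_def)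

lemma gn_sq_unit: "\<not> int p dvd x \<Longrightarrow> gn (c * x^2) = gn c"
  using gs_sq_unit[OF p_pos] unit_iff by (simp add: gn_def)

lemma gn_nz: "\<not> int p dvd c \<Longrightarrow> gn c \<noteq> 0"
proof -
  assume "\<not> int p dvd c"
  then have "coprime (2 * c) (int p)" using unit_iff not_dvd_2 dvd_mult_iff by simp
  then show ?thesis using gs_nz[OF p_pos] cs_nz[OF p_pos] by (simp add: gn_def)
qed

lemma gn_K: "\<not> int p dvd x \<Longrightarrow> \<not> int p dvd y \<Longrightarrow> gn x * gn y = gn 1 * gn (x * y)"
  using gs_K by (simp add: gn_def)

lemma gn_1m1: "gn 1 * gn (-1) = 1"
proof -
  have "gn 1 * gn (-1) = gs p 1 * gs p (-1) / (cs p * cs p)" by (simp add: gn_def)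
  also have "\<dots> = 1" using gs_1m1 cs_sq_p p_pos by simp
  finally show ?thesis .
qed

lemma gn1_4: "gn 1 ^ 4 = 1"
proof -
  have m1: "\<not> int p dvd (-1)" using p_gt2 by simp
  have "gn (-1) * gn (-1) = gn 1 * gn 1" using gn_K[OF m1 m1] by simp
  then have "(gn 1 * gn (-1)) * (gn 1 * gn (-1)) = gn 1 ^ 4" by (simp add: power4_eq_xxxx algebra_simps)
  then show ?thesis using gn_1m1 by simp
qed

lemma sigma_gn: "sigma p a = gn (- a)" by (simp add: sigma_gs gn_def)

lemma D1: assumes g: "\<not> int p dvd g" shows "gn (- a) ^ 2 * gn (- a * g) = gn (a * g)"
proof -
  have ma: "\<not> int p dvd (- a)" using au by simp
  have m1: "\<not> int p dvd (-1)" using p_gt2 by simp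
  have ag: "\<not> int p dvd a * g" using au g dvd_mult_iff by blast
  have "gn (- a) * gn (- a) = gn 1 * gn (1 * a^2)" using gn_K[OF ma ma] by (simp add: power2_eq_square)
  also have "gn (1 * a^2) = gn 1" using gn_sq_unit[OF au] .
  finally have 1: "gn (- a) ^ 2 = gn 1 * gn 1" by (simp add: power2_eq_square)
  have 2: "gn (-1) * gn (a * g) = gn 1 * gn (- a * g)" using gn_K[OF m1 ag] by simp
  have "gn (- a) ^ 2 * gn (- a * g) = gn 1 * (gn 1 * gn (- a * g))" using 1 by simp
  also have "\<dots> = gn 1 * gn (-1) * gn (a * g)" using 2 by simp
  also have "\<dots> = gn (a * g)" using gn_1m1 by simp
  finally show ?thesis .
qed

lemma D2: assumes g: "\<not> int p dvd g" and al: "\<not> int p dvd al" and gi: "[g * gi = 1] (mod int p)"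
  shows "gn (- a) * gn (- a * g) * gn (a * gi * al) = gn (- a * al)"
proof -
  have ma: "\<not> int p dvd (- a)" using au by simp
  have m1: "\<not> int p dvd (-1)" using p_gt2 by simp
  have mag: "\<not> int p dvd (- a * g)" using au g dvd_mult_iff by simp
  have giu: "\<not> int p dvd gi" using inv_unit[OF gi] .
  have agial: "\<not> int p dvd (a * gi * al)" using au giu al dvd_mult_iff by simp
  have aal: "\<not> int p dvd (a * al)" using au al dvd_mult_iff by simp
  have "gn (- a) * gn (- a * g) = gn 1 * gn (g * a^2)"
    using gn_K[OF ma mag] by (simp add: power2_eq_square ac_simps)
  also have "gn (g * a^2) = gn g" using gn_sq_unit[OF au] .
  finally have 1: "gn (- a) * gn (- a * g) = gn 1 * gn g" .
  have "gn g * gn (a * gi * al) = gn 1 * gn (g * (a * gi * al))" using gn_K[OF g agial] .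
  also have "gn (g * (a * gi * al)) = gn (a * al)"
  proof (rule gn_cong)
    have "[(g * gi) * (a * al) = 1 * (a * al)] (mod int p)" using gi by (rule cong_scalar_right)
    then show "[g * (a * gi * al) = a * al] (mod int p)" by (simp add: ac_simps)
  qed
  finally have 2: "gn g * gn (a * gi * al) = gn 1 * gn (a * al)" .
  have 3: "gn (-1) * gn (a * al) = gn 1 * gn (- a * al)" using gn_K[OF m1 aal] by simp
  have 4: "gn (-1) * gn (-1) = gn 1 * gn 1" using gn_K[OF m1 m1] by simp
  have "gn (- a) * gn (- a * g) * gn (a * gi * al) = gn 1 * (gn g * gn (a * gi * al))" using 1 by (simp add: ac_simps)
  also have "\<dots> = (gn 1 * gn 1) * gn (a * al)" using 2 by (simp add: ac_simps)
  also have "\<dots> = gn (-1) * (gn (-1) * gn (a * al))" using 4 by (simp add: ac_simps)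
  also have "\<dots> = (gn 1 * gn (-1)) * gn (- a * al)" using 3 by (simp add: ac_simps)
  finally show ?thesis using gn_1m1 by simp
qed

end


context pcase begin

definition Rm :: "int \<Rightarrow> int \<Rightarrow> int \<Rightarrow> int \<Rightarrow> (int \<Rightarrow> complex) \<Rightarrow> (int \<Rightarrow> complex)" where
  "Rm al b g d f = (\<lambda>y. if int p dvd g then gn (- a * al) / gn (- a) * ez p (a * al * b * y^2) * f (al * y)
     else gn (- a * g) / cs p * (\<Sum>x\<in>{0..<int p}. ez p (a * minv g * (al * y^2 - 2 * x * y + d * x^2)) * f x))"

lemma gna_nz: "gn (- a) \<noteq> 0" using gn_nz au by simp

lemma RT:
  assumes det: "al * d - b * g = 1" and f: "periodic p f"
  shows "weil p a GenT (Rm al b g d f) = Rm (al + g) (b + d) g d f"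
proof
  fix y
  show "weil p a GenT (Rm al b g d f) y = Rm (al + g) (b + d) g d f y"
  proof (cases "int p dvd g")
    case True
    then obtain k where k: "g = int p * k" by blast
    have 1: "gn (- a * (al + g)) = gn (- a * al)"
      by (rule gn_cong) (simp add: cong_iff_dvd_diff k algebra_simps)
    have 2: "f ((al + g) * y) = f (al * y)"
      by (rule periodic_cong[OF f]) (simp add: cong_iff_dvd_diff k algebra_simps)
    have 3: "ez p (a * (al + g) * (b + d) * y^2) = ez p (a * y^2) * ez p (a * al * b * y^2)"
    proof -
      have "ez p (a * (al + g) * (b + d) * y^2) = ez p (a * y^2 + a * al * b * y^2)"
        by (rule ez_dvd[OF p_pos]) (use det k in Groebner_Basis.algebra)
      then show ?thesis by (simp add: eq_add)
    qed
    show ?thesis using True 1 2 3 by (simp add: Rm_def weilT)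
  next
    case False
    obtain k where k: "g * minv g = 1 + int p * k" using minv_eq[OF False] by blast
    have e: "ez p (a * minv g * ((al + g) * y^2 - 2 * x * y + d * x^2)) = ez p (a * y^2) * ez p (a * minv g * (al * y^2 - 2 * x * y + d * x^2))" for x
    proof -
      have "ez p (a * minv g * ((al + g) * y^2 - 2 * x * y + d * x^2)) = ez p (a * y^2 + a * minv g * (al * y^2 - 2 * x * y + d * x^2))"
        by (rule ez_dvd[OF p_pos]) (use k in Groebner_Basis.algebra)
      then show ?thesis by (simp add: eq_add)
    qed
    have s: "(\<Sum>x\<in>{0..<int p}. ez p (a * minv g * ((al + g) * y^2 - 2 * x * y + d * x^2)) * f x)
       = ez p (a * y^2) * (\<Sum>x\<in>{0..<int p}. ez p (a * minv g * (al * y^2 - 2 * x * y + d * x^2)) * f x)"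
      unfolding e by (simp only: sum_distrib_left mult.assoc)
    show ?thesis using False unfolding Rm_def weilT by (simp only: s if_False) (simp add: ac_simps)
  qed
qed

lemma sum_geom_p: "(\<Sum>y\<in>{0..<int p}. ez p (y * c)) = (if int p dvd c then of_nat p else 0)"
  by (rule geom_sum[OF p_pos])

lemma RS:
  assumes det: "al * d - b * g = 1" and f: "periodic p f"
  shows "weil p a GenS (Rm al b g d f) = Rm (- g) (- d) al b f"
proof
  fix z
  have sg: "sigma p a = gn (- a)" by (rule sigma_gn)
  show "weil p a GenS (Rm al b g d f) z = Rm (- g) (- d) al b f z"
  proof (cases "int p dvd g")
    case True
    then obtain k where k: "g = int p * k" by blast
    have alu: "\<not> int p dvd al"
    proof
      assume "int p dvd al"
      then have "int p dvd al * d - b * g" using True by simp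
      then show False using det p_gt2 by simp
    qed
    obtain k2 where k2: "al * minv al = 1 + int p * k2" using minv_eq[OF alu] by blast
    let ?ai = "minv al"
    have aiu: "coprime ?ai (int p)" using minv_u[OF alu] unit_iff by blast
    let ?F = "\<lambda>y. ez p (- (2 * a * z * y)) * ez p (a * al * b * y^2) * f (al * y)"
    have Fp: "periodic p ?F"
    proof -
      have "f (al * (y + int p)) = f (al * y)" for y
        by (rule periodic_cong[OF f]) (simp add: cong_iff_dvd_diff algebra_simps)
      moreover have "ez p (- (2 * a * z * (y + int p))) = ez p (- (2 * a * z * y))" for y
        by (rule ez_dvd[OF p_pos]) (simp add: algebra_simps)
      moreover have "ez p (a * al * b * (y + int p)^2) = ez p (a * al * b * y^2)" for y
        by (rule ez_dvd[OF p_pos]) Groebner_Basis.algebra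
      ultimately show ?thesis by (simp add: periodic_def)
    qed
    have FF: "?F (?ai * x + 0) = ez p (a * ?ai * (- g * z^2 - 2 * x * z + al * 0 + b * x^2)) * f x" for x
    proof -
      have "f (al * (?ai * x + 0)) = f x"
        by (rule periodic_cong[OF f]) (use k2 in \<open>simp add: cong_iff_dvd_diff, Groebner_Basis.algebra\<close>)
      moreover have "ez p (- (2 * a * z * (?ai * x + 0))) * ez p (a * al * b * (?ai * x + 0)^2) = ez p (a * ?ai * (- g * z^2 - 2 * x * z + al * 0 + b * x^2))"
      proof -
        have "ez p (- (2 * a * z * (?ai * x + 0)) + a * al * b * (?ai * x + 0)^2) = ez p (a * ?ai * (- g * z^2 - 2 * x * z + al * 0 + b * x^2))"
          by (rule ez_dvd[OF p_pos]) (use k k2 in Groebner_Basis.algebra)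
        then show ?thesis by (simp only: eq_add)
      qed
      ultimately show ?thesis by simp
    qed
    have "weil p a GenS (Rm al b g d f) z = gn (- a) / cs p * (\<Sum>y\<in>{0..<int p}. ez p (- (2 * a * z * y)) * (gn (- a * al) / gn (- a) * ez p (a * al * b * y^2) * f (al * y)))"
      using True by (simp add: weilS Rm_def sg)
    also have "\<dots> = gn (- a * al) / cs p * (\<Sum>y\<in>{0..<int p}. ?F y)"
      using gna_nz by (simp add: sum_distrib_left ac_simps)
    also have "(\<Sum>y\<in>{0..<int p}. ?F y) = (\<Sum>x\<in>{0..<int p}. ?F (?ai * x + 0))"
      by (rule sum_affine[OF p_pos Fp aiu, symmetric])
    also have "\<dots> = (\<Sum>x\<in>{0..<int p}. ez p (a * ?ai * (- g * z^2 - 2 * x * z + b * x^2)) * f x)"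
      using FF by simp
    finally show ?thesis using alu by (simp add: Rm_def ac_simps)
  next
    case gnd: False
    obtain k1 where k1: "g * minv g = 1 + int p * k1" using minv_eq[OF gnd] by blast
    let ?gi = "minv g"
    have sumform: "weil p a GenS (Rm al b g d f) z = gn (- a) * (gn (- a * g) / cs p) / cs p *
        (\<Sum>x\<in>{0..<int p}. f x * (\<Sum>y\<in>{0..<int p}. ez p (- (2 * a * z * y)) * ez p (a * ?gi * (al * y^2 - 2 * x * y + d * x^2))))"
    proof -
      have "weil p a GenS (Rm al b g d f) z = gn (- a) / cs p * (\<Sum>y\<in>{0..<int p}. ez p (- (2 * a * z * y)) *
          (gn (- a * g) / cs p * (\<Sum>x\<in>{0..<int p}. ez p (a * ?gi * (al * y^2 - 2 * x * y + d * x^2)) * f x)))"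
        by (simp only: weilS Rm_def sg gnd if_False)
      also have "\<dots> = gn (- a) / cs p * (gn (- a * g) / cs p * (\<Sum>x\<in>{0..<int p}. f x * (\<Sum>y\<in>{0..<int p}. ez p (- (2 * a * z * y)) * ez p (a * ?gi * (al * y^2 - 2 * x * y + d * x^2)))))"
        by (simp only: dsum)
      finally show ?thesis by (simp only: ac_simps times_divide_eq_left times_divide_eq_right)
    qed
    show ?thesis
    proof (cases "int p dvd al")
      case True
      then obtain k3 where k3: "al - int p * k3 = 0" by (metis dvd_def diff_self)
      have inner: "(\<Sum>y\<in>{0..<int p}. ez p (- (2 * a * z * y)) * ez p (a * ?gi * (al * y^2 - 2 * x * y + d * x^2)))
          = ez p (a * ?gi * d * x^2) * (if int p dvd g * z + x then of_nat p else 0)" for x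
      proof -
        have "ez p (- (2 * a * z * y)) * ez p (a * ?gi * (al * y^2 - 2 * x * y + d * x^2)) = ez p (a * ?gi * d * x^2) * ez p (y * (- (2 * a) * (z + ?gi * x)))" for y
        proof -
          have "ez p (- (2 * a * z * y) + a * ?gi * (al * y^2 - 2 * x * y + d * x^2)) = ez p (a * ?gi * d * x^2 + y * (- (2 * a) * (z + ?gi * x)))"
            by (rule ez_dvd[OF p_pos]) (use k3 in Groebner_Basis.algebra)
          then show ?thesis by (simp only: eq_add)
        qed
        then have "(\<Sum>y\<in>{0..<int p}. ez p (- (2 * a * z * y)) * ez p (a * ?gi * (al * y^2 - 2 * x * y + d * x^2)))
            = ez p (a * ?gi * d * x^2) * (\<Sum>y\<in>{0..<int p}. ez p (y * (- (2 * a) * (z + ?gi * x))))"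
          by (simp add: sum_distrib_left)
        also have "(\<Sum>y\<in>{0..<int p}. ez p (y * (- (2 * a) * (z + ?gi * x)))) = (if int p dvd g * z + x then of_nat p else 0)"
        proof -
          have "int p dvd (- (2 * a) * (z + ?gi * x)) \<longleftrightarrow> int p dvd z + ?gi * x"
            using dvd_mult_iff not_dvd_2 au by simp
          also have "\<dots> \<longleftrightarrow> int p dvd g * z + x"
          proof
            assume "int p dvd z + ?gi * x"
            then have d1: "int p dvd g * (z + ?gi * x)" by simp
            have d2: "int p dvd g * (z + ?gi * x) - (g * z + x)" using k1 by Groebner_Basis.algebra
            show "int p dvd g * z + x" using dvd_diff[OF d1 d2] by simp
          next
            assume d1: "int p dvd g * z + x"
            have d2: "int p dvd g * (z + ?gi * x) - (g * z + x)" using k1 by Groebner_Basis.algebra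
            have "int p dvd (g * (z + ?gi * x) - (g * z + x)) + (g * z + x)" using dvd_add[OF d2 d1] .
            then have "int p dvd g * (z + ?gi * x)" by simp
            then show "int p dvd z + ?gi * x" using gnd dvd_mult_iff by blast
          qed
          finally have cnd: "int p dvd (- (2 * a) * (z + ?gi * x)) \<longleftrightarrow> int p dvd g * z + x" .
          have "(\<Sum>y\<in>{0..<int p}. ez p (y * (- (2 * a) * (z + ?gi * x)))) = (if int p dvd (- (2 * a) * (z + ?gi * x)) then of_nat p else 0)"
            by (rule sum_geom_p)
          then show ?thesis by (simp only: cnd)
        qed
        finally show ?thesis .
      qed
      let ?H = "\<lambda>x. f x * ez p (a * ?gi * d * x^2) * of_nat p"
      have Hp: "periodic p ?H"
      proof -
        have "ez p (a * ?gi * d * (x + int p)^2) = ez p (a * ?gi * d * x^2)" for x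
          by (rule ez_dvd[OF p_pos]) Groebner_Basis.algebra
        then show ?thesis using f by (simp add: periodic_def)
      qed
      have "(\<Sum>x\<in>{0..<int p}. f x * (ez p (a * ?gi * d * x^2) * (if int p dvd g * z + x then of_nat p else 0)))
          = (\<Sum>x\<in>{0..<int p}. if int p dvd g * z + x then ?H x else 0)"
        by (intro sum.cong refl) (simp add: ac_simps)
      also have "\<dots> = ?H ((- (g * z)) mod int p)" by (rule sum_delta_mod[OF p_pos])
      also have "\<dots> = ?H (- (g * z))" by (rule periodic_mod[OF Hp])
      finally have S1: "weil p a GenS (Rm al b g d f) z = gn (- a) * (gn (- a * g) / cs p) / cs p * ?H (- (g * z))"
        using sumform inner by simp
      have cst: "gn (- a) * gn (- a * g) = gn (- a * - g) / gn (- a)"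
        using D1[OF gnd] gna_nz by (simp add: field_simps power2_eq_square)
      have ezz: "ez p (a * ?gi * d * (- (g * z))^2) = ez p (a * - g * - d * z^2)"
        by (rule ez_dvd[OF p_pos]) (use k1 in Groebner_Basis.algebra)
      have "weil p a GenS (Rm al b g d f) z = gn (- a) * gn (- a * g) * f (- (g * z)) * ez p (a * ?gi * d * (- (g * z))^2)"
        using S1 cs_sq_p p_pos by (simp add: field_simps)
      also have "\<dots> = gn (- a * - g) / gn (- a) * ez p (a * - g * - d * z^2) * f (- g * z)"
        using cst ezz by simp
      finally show ?thesis using True by (simp add: Rm_def)
    next
      case alu: False
      obtain k2 where k2: "al * minv al = 1 + int p * k2" using minv_eq[OF alu] by blast
      let ?ai = "minv al"
      let ?C = "\<lambda>x. a * ?ai * (- g * z^2 - 2 * x * z + b * x^2)"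
      have inner: "(\<Sum>y\<in>{0..<int p}. ez p (- (2 * a * z * y)) * ez p (a * ?gi * (al * y^2 - 2 * x * y + d * x^2)))
          = ez p (?C x) * gs p (a * ?gi * al)" for x
      proof -
        let ?Hy = "\<lambda>y. ez p (- (2 * a * z * y)) * ez p (a * ?gi * (al * y^2 - 2 * x * y + d * x^2))"
        have Hyp: "periodic p ?Hy"
        proof -
          have "ez p (- (2 * a * z * (y + int p))) = ez p (- (2 * a * z * y))" for y
            by (rule ez_dvd[OF p_pos]) Groebner_Basis.algebra
          moreover have "ez p (a * ?gi * (al * (y + int p)^2 - 2 * x * (y + int p) + d * x^2)) = ez p (a * ?gi * (al * y^2 - 2 * x * y + d * x^2))" for y
            by (rule ez_dvd[OF p_pos]) Groebner_Basis.algebra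
          ultimately show ?thesis by (simp add: periodic_def)
        qed
        have "(\<Sum>y\<in>{0..<int p}. ?Hy y) = (\<Sum>y\<in>{0..<int p}. ?Hy (y + ?ai * (x + g * z)))"
          by (rule sum_shift[OF p_pos Hyp, symmetric])
        also have "\<dots> = (\<Sum>y\<in>{0..<int p}. ez p (?C x) * ez p (a * ?gi * al * y^2))"
        proof (intro sum.cong refl)
          fix y
          have "ez p (- (2 * a * z * (y + ?ai * (x + g * z))) + a * ?gi * (al * (y + ?ai * (x + g * z))^2 - 2 * x * (y + ?ai * (x + g * z)) + d * x^2))
              = ez p (?C x + a * ?gi * al * y^2)"
            by (rule ez_dvd[OF p_pos]) (use k1 k2 det in Groebner_Basis.algebra)
          then show "?Hy (y + ?ai * (x + g * z)) = ez p (?C x) * ez p (a * ?gi * al * y^2)" by (simp only: eq_add)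
        qed
        also have "\<dots> = ez p (?C x) * gs p (a * ?gi * al)" by (simp add: gs_def sum_distrib_left)
        finally show ?thesis .
      qed
      have giu: "[g * ?gi = 1] (mod int p)" using minv_cong[OF gnd] .
      have cst: "gn (- a) * gn (- a * g) * gn (a * ?gi * al) = gn (- a * al)" by (rule D2[OF gnd alu giu])
      have "weil p a GenS (Rm al b g d f) z = gn (- a) * (gn (- a * g) / cs p) / cs p * gs p (a * ?gi * al) *
          (\<Sum>x\<in>{0..<int p}. ez p (?C x) * f x)"
      proof -
        have r: "(\<Sum>x\<in>{0..<int p}. f x * (ez p (?C x) * gs p (a * ?gi * al))) = gs p (a * ?gi * al) * (\<Sum>x\<in>{0..<int p}. ez p (?C x) * f x)"
          by (simp add: sum_distrib_left ac_simps)
        have "weil p a GenS (Rm al b g d f) z = gn (- a) * (gn (- a * g) / cs p) / cs p *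
          (\<Sum>x\<in>{0..<int p}. f x * (ez p (?C x) * gs p (a * ?gi * al)))" by (simp only: sumform inner)
        also have "\<dots> = gn (- a) * (gn (- a * g) / cs p) / cs p * (gs p (a * ?gi * al) * (\<Sum>x\<in>{0..<int p}. ez p (?C x) * f x))"
          by (simp only: r)
        finally show ?thesis by (simp only: mult.assoc[symmetric])
      qed
      also have "gn (- a) * (gn (- a * g) / cs p) / cs p * gs p (a * ?gi * al) = gn (- a * al) / cs p"
      proof -
        have "gs p (a * ?gi * al) = gn (a * ?gi * al) * cs p" using cs_nz[OF p_pos] by (simp add: gn_def)
        then have "gn (- a) * (gn (- a * g) / cs p) / cs p * gs p (a * ?gi * al) = (gn (- a) * gn (- a * g) * gn (a * ?gi * al)) / cs p"
          using cs_nz[OF p_pos] by (simp add: field_simps)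
        then show ?thesis using cst by simp
      qed
      finally show ?thesis using alu by (simp add: Rm_def ac_simps)
    qed
  qed
qed

end


lemma det_word: "word_mat w = ((al, b), (g, d)) \<Longrightarrow> al * d - b * g = 1"
proof (induction w arbitrary: al b g d)
  case Nil then show ?case by (simp add: mid_def)
next
  case (Cons x w)
  obtain al' b' g' d' where m: "word_mat w = ((al', b'), (g', d'))" by (metis prod.exhaust)
  have det: "al' * d' - b' * g' = 1" using Cons.IH[OF m] .
  show ?case
  proof (cases x)
    case GenS then show ?thesis using Cons.prems m det by (auto simp: algebra_simps)
  next
    case GenT then show ?thesis using Cons.prems m det by (auto simp: algebra_simps)
  qed
qed

context pcase begin

lemma formula:
  assumes f: "periodic p f"
  shows "word_act (weil p a) w f = (case word_mat w of ((al, b), (g, d)) \<Rightarrow> Rm al b g d f)"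
proof (induction w)
  case Nil
  have "Rm 1 0 0 1 f = f" using gna_nz by (simp add: Rm_def fun_eq_iff)
  then show ?case by (simp add: mid_def)
next
  case (Cons x w)
  obtain al b g d where m: "word_mat w = ((al, b), (g, d))" by (metis prod.exhaust)
  have det: "al * d - b * g = 1" using det_word[OF m] .
  show ?case
  proof (cases x)
    case GenS
    have "word_mat (x # w) = ((- g, - d), (al, b))" using GenS m by simp
    then show ?thesis using Cons.IH m GenS RS[OF det f] by simp
  next
    case GenT
    have "word_mat (x # w) = ((al + g, b + d), (g, d))" using GenT m by simp
    then show ?thesis using Cons.IH m GenT RT[OF det f] by simp
  qed
qed

lemma prime_gamma:
  assumes G: "in_Gamma p (word_mat w)" and f: "periodic p f"
  shows "word_act (weil p a) w f = f"
proof -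
  obtain al b g d where m: "word_mat w = ((al, b), (g, d))" by (metis prod.exhaust)
  have c: "[al = 1] (mod int p)" "[b = 0] (mod int p)" "[g = 0] (mod int p)"
    using G m by (auto simp: in_Gamma_def)
  have g: "int p dvd g" using c(3) by (simp add: cong_0_iff)
  have bb: "int p dvd b" using c(2) by (simp add: cong_0_iff)
  have 1: "gn (- a * al) = gn (- a)" using gn_cong c(1) by (metis cong_scalar_left mult.right_neutral)
  have 2: "ez p (a * al * b * y^2) = 1" for y
    using eq_1_iff[OF p_pos] bb by (metis dvd_mult dvd_mult2 mult.commute)
  have 3: "f (al * y) = f y" for y using periodic_cong[OF f] c(1) by (metis cong_scalar_right mult_1)
  show ?thesis using formula[OF f, of w] m g 1 2 3 gna_nz by (simp add: Rm_def fun_eq_iff)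
qed

end


definition Wy :: "nat \<Rightarrow> int \<Rightarrow> int \<Rightarrow> int \<Rightarrow> (int \<Rightarrow> complex) \<Rightarrow> (int \<Rightarrow> complex)" where
  "Wy q a u v f = (\<lambda>x. ez q (a * (2 * v * x + u * v)) * f (x + u))"

definition tau :: "mat2 \<Rightarrow> int \<Rightarrow> int \<Rightarrow> int \<times> int" where
  "tau M u v = (case M of ((al, b), (g, d)) \<Rightarrow> (d * u - g * v, - b * u + al * v))"

lemma Wy_periodic: "q > 0 \<Longrightarrow> periodic q f \<Longrightarrow> periodic q (Wy q a u v f)"
proof -
  assume q: "q > 0" and f: "periodic q f"
  have "ez q (a * (2 * v * (x + int q) + u * v)) = ez q (a * (2 * v * x + u * v))" for x
    by (rule ez_dvd[OF q]) (simp add: algebra_simps)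
  moreover have "f (x + int q + u) = f (x + u)" for x using f[unfolded periodic_def, rule_format, of "x + u"] by (simp add: ac_simps)
  ultimately show ?thesis by (simp add: periodic_def Wy_def)
qed

lemma H_T: "weil q a GenT (Wy q a u v f) = Wy q a u (v - u) (weil q a GenT f)"
proof
  fix x
  have "ez q (a * x^2) * ez q (a * (2 * v * x + u * v)) = ez q (a * (2 * (v - u) * x + u * (v - u))) * ez q (a * (x + u)^2)"
  proof -
    have "a * x^2 + a * (2 * v * x + u * v) = a * (2 * (v - u) * x + u * (v - u)) + a * (x + u)^2"
      by (simp add: power2_eq_square algebra_simps)
    then show ?thesis by (metis eq_add)
  qed
  then show "weil q a GenT (Wy q a u v f) x = Wy q a u (v - u) (weil q a GenT f) x"
    by (simp add: weilT Wy_def ac_simps)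
qed

lemma H_S:
  assumes q: "q > 0" and f: "periodic q f"
  shows "weil q a GenS (Wy q a u v f) = Wy q a (- v) u (weil q a GenS f)"
proof
  fix y
  let ?F = "\<lambda>x. ez q (- (2 * a * y * (x - u))) * ez q (a * (2 * v * (x - u) + u * v)) * f x"
  have Fp: "periodic q ?F"
  proof -
    have "ez q (- (2 * a * y * (x + int q - u))) = ez q (- (2 * a * y * (x - u)))" for x
      by (rule ez_dvd[OF q]) (simp add: algebra_simps)
    moreover have "ez q (a * (2 * v * (x + int q - u) + u * v)) = ez q (a * (2 * v * (x - u) + u * v))" for x
      by (rule ez_dvd[OF q]) (simp add: algebra_simps)
    ultimately show ?thesis using f by (simp add: periodic_def)
  qed
  have "(\<Sum>x\<in>{0..<int q}. ez q (- (2 * a * y * x)) * (ez q (a * (2 * v * x + u * v)) * f (x + u)))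
      = (\<Sum>x\<in>{0..<int q}. ?F (x + u))" by (simp add: ac_simps)
  also have "\<dots> = (\<Sum>x\<in>{0..<int q}. ?F x)" by (rule sum_shift[OF q Fp])
  also have "\<dots> = ez q (a * (2 * u * y + - v * u)) * (\<Sum>x\<in>{0..<int q}. ez q (- (2 * a * (y + - v) * x)) * f x)"
  proof -
    have pw: "?F x = ez q (a * (2 * u * y + - v * u)) * (ez q (- (2 * a * (y + - v) * x)) * f x)" for x
    proof -
      have "- (2 * a * y * (x - u)) + a * (2 * v * (x - u) + u * v) = a * (2 * u * y + - v * u) + - (2 * a * (y + - v) * x)"
        by (simp add: algebra_simps)
      then have "ez q (- (2 * a * y * (x - u))) * ez q (a * (2 * v * (x - u) + u * v)) = ez q (a * (2 * u * y + - v * u)) * ez q (- (2 * a * (y + - v) * x))"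
        by (metis eq_add)
      then show ?thesis by (simp add: ac_simps)
    qed
    then show ?thesis by (simp only: pw sum_distrib_left)
  qed
  finally show "weil q a GenS (Wy q a u v f) y = Wy q a (- v) u (weil q a GenS f) y"
    by (simp add: weilS Wy_def ac_simps)
qed

lemma H_word:
  assumes q: "q > 0" and f: "periodic q f"
  shows "word_act (weil q a) w (Wy q a u v f) = Wy q a (fst (tau (word_mat w) u v)) (snd (tau (word_mat w) u v)) (word_act (weil q a) w f)"
proof (induction w arbitrary: u v)
  case Nil then show ?case by (simp add: tau_def mid_def)
next
  case (Cons x w)
  obtain al b g d where m: "word_mat w = ((al, b), (g, d))" by (metis prod.exhaust)
  have wf: "periodic q (word_act (weil q a) w f)" using word_act_periodic[OF q f] .
  show ?case
  proof (cases x)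
    case GenS
    have "tau (word_mat (x # w)) u v = (- (- b * u + al * v), d * u - g * v)" using GenS m by (simp add: tau_def algebra_simps)
    then show ?thesis using Cons.IH[of u v] GenS m H_S[OF q wf] by (simp add: tau_def)
  next
    case GenT
    have "tau (word_mat (x # w)) u v = (d * u - g * v, (- b * u + al * v) - (d * u - g * v))" using GenT m by (simp add: tau_def algebra_simps)
    then show ?thesis using Cons.IH[of u v] GenT m H_T by (simp add: tau_def)
  qed
qed

lemma Wy_cong:
  assumes q: "q > 0" and f: "periodic q f" and u: "[u = u'] (mod int q)" and v: "[v = v'] (mod int q)"
  shows "Wy q a u v f = Wy q a u' v' f"
proof
  fix x
  have "int q dvd u - u'" using u by (simp add: cong_iff_dvd_diff)
  then obtain k where "u - u' = int q * k" by blast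
  then have k: "u - u' - int q * k = 0" by simp
  have "int q dvd v - v'" using v by (simp add: cong_iff_dvd_diff)
  then obtain l where "v - v' = int q * l" by blast
  then have l: "v - v' - int q * l = 0" by simp
  have "ez q (a * (2 * v * x + u * v)) = ez q (a * (2 * v' * x + u' * v'))"
    by (rule ez_dvd[OF q]) (use k l in Groebner_Basis.algebra)
  moreover have "f (x + u) = f (x + u')" using periodic_cong[OF f] u by (simp add: cong_add_lcancel)
  ultimately show "Wy q a u v f x = Wy q a u' v' f x" by (simp add: Wy_def)
qed

lemma Gamma_commute:
  assumes q: "q > 0" and f: "periodic q f" and G: "in_Gamma q (word_mat w)"
  shows "word_act (weil q a) w (Wy q a u v f) = Wy q a u v (word_act (weil q a) w f)"
proof -
  obtain al b g d where m: "word_mat w = ((al, b), (g, d))" by (metis prod.exhaust)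
  have c: "[al = 1] (mod int q)" "[b = 0] (mod int q)" "[g = 0] (mod int q)" "[d = 1] (mod int q)"
    using G m by (auto simp: in_Gamma_def)
  have "[d * u - g * v = 1 * u - 0 * v] (mod int q)" using c by (intro cong_diff cong_mult cong_refl)
  then have 1: "[d * u - g * v = u] (mod int q)" by simp
  have "[- b * u + al * v = - 0 * u + 1 * v] (mod int q)" using c by (intro cong_add cong_mult cong_refl cong_minus_minus_iff[THEN iffD2])
  then have 2: "[- b * u + al * v = v] (mod int q)" by simp
  have wf: "periodic q (word_act (weil q a) w f)" using word_act_periodic[OF q f] .
  show ?thesis using H_word[OF q f, where w=w and u=u and v=v] m Wy_cong[OF q wf 1 2] by (simp add: tau_def)
qed

definition delta0 :: "nat \<Rightarrow> int \<Rightarrow> complex" where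
  "delta0 q = (\<lambda>x. if int q dvd x then 1 else 0)"

lemma delta0_periodic: "periodic q (delta0 q)"
  by (simp add: periodic_def delta0_def)

lemma scalar:
  assumes q: "q > 0" and ca: "coprime (2 * a) (int q)" and G: "in_Gamma q (word_mat w)"
  shows "\<exists>c. \<forall>f. periodic q f \<longrightarrow> word_act (weil q a) w f = (\<lambda>x. c * f x)"
proof -
  let ?A = "word_act (weil q a) w"
  let ?g = "?A (delta0 q)"
  have gp: "periodic q ?g" using word_act_periodic[OF q delta0_periodic] .
  have W01: "Wy q a 0 1 (delta0 q) = delta0 q"
  proof
    fix x show "Wy q a 0 1 (delta0 q) x = delta0 q x"
      using eq_1_iff[OF q, of "a * (2 * 1 * x + 0 * 1)"] by (auto simp: Wy_def delta0_def)
  qed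
  have "?g = Wy q a 0 1 ?g" using Gamma_commute[OF q delta0_periodic G, where a=a and u=0 and v=1] W01 by simp
  then have gx: "?g x = ez q (a * (2 * x)) * ?g x" for x by (metis Wy_def add_0_right mult_1_right mult_zero_left add.right_neutral mult_1 mult.commute)
  have gform: "?g = (\<lambda>x. ?g 0 * delta0 q x)"
  proof
    fix x
    show "?g x = ?g 0 * delta0 q x"
    proof (cases "int q dvd x")
      case True
      then have "[x = 0] (mod int q)" by (simp add: cong_0_iff)
      then show ?thesis using periodic_cong[OF gp] True by (simp add: delta0_def)
    next
      case False
      have "?g x = 0"
      proof (rule ccontr)
        assume "?g x \<noteq> 0"
        then have "ez q (a * (2 * x)) = 1" using gx[of x] by simp
        then have "int q dvd (2 * a) * x" using eq_1_iff[OF q] by (simp add: ac_simps)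
        then have "int q dvd x" using coprime_dvd_mult_cancel[OF ca] by blast
        then show False using False by blast
      qed
      then show ?thesis using False by (simp add: delta0_def)
    qed
  qed
  let ?c = "?g 0"
  have dy: "?A (Wy q a (- y) 0 (delta0 q)) = (\<lambda>x. ?c * Wy q a (- y) 0 (delta0 q) x)" for y
  proof -
    have "?A (Wy q a (- y) 0 (delta0 q)) = Wy q a (- y) 0 ?g" using Gamma_commute[OF q delta0_periodic G] .
    also have "\<dots> = Wy q a (- y) 0 (\<lambda>x. ?c * delta0 q x)" using gform by simp
    also have "\<dots> = (\<lambda>x. ?c * Wy q a (- y) 0 (delta0 q) x)" by (simp add: Wy_def fun_eq_iff)
    finally show ?thesis .
  qed
  have decomp: "f = (\<lambda>x. \<Sum>y\<in>{0..<int q}. f y * Wy q a (- y) 0 (delta0 q) x)" if f: "periodic q f" for f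
  proof
    fix x
    have "(\<Sum>y\<in>{0..<int q}. f y * Wy q a (- y) 0 (delta0 q) x) = (\<Sum>y\<in>{0..<int q}. if int q dvd (- x) + y then f y else 0)"
    proof (intro sum.cong refl)
      fix y
      have "int q dvd x + - y \<longleftrightarrow> int q dvd (- x) + y" by (metis dvd_minus_iff minus_add_distrib minus_minus)
      then show "f y * Wy q a (- y) 0 (delta0 q) x = (if int q dvd (- x) + y then f y else 0)"
        by (simp add: Wy_def delta0_def)
    qed
    also have "\<dots> = f ((- (- x)) mod int q)" by (rule sum_delta_mod[OF q])
    also have "\<dots> = f x" using periodic_mod[OF f] by simp
    finally show "f x = (\<Sum>y\<in>{0..<int q}. f y * Wy q a (- y) 0 (delta0 q) x)" by simp
  qed
  show ?thesis
  proof (intro exI allI impI)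
    fix f :: "int \<Rightarrow> complex" assume f: "periodic q f"
    have "?A f = ?A (\<lambda>x. \<Sum>y\<in>{0..<int q}. f y * Wy q a (- y) 0 (delta0 q) x)" using decomp[OF f] by simp
    also have "\<dots> = (\<lambda>x. \<Sum>y\<in>{0..<int q}. f y * ?A (Wy q a (- y) 0 (delta0 q)) x)"
      by (rule word_act_sum) simp
    also have "\<dots> = (\<lambda>x. ?c * (\<Sum>y\<in>{0..<int q}. f y * Wy q a (- y) 0 (delta0 q) x))"
      by (simp add: dy sum_distrib_left ac_simps)
    also have "\<dots> = (\<lambda>x. ?c * f x)" using decomp[OF f] by metis
    finally show "?A f = (\<lambda>x. ?c * f x)" .
  qed
qed


declare of_nat_power [simp del] of_int_power [simp del]


lemma ez_scale: assumes "m > 0" shows "ez (m * n) (int m * r) = ez n r"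
  using assms by (simp add: ez_def)

lemma ez_one: "ez 1 r = 1" using eq_1_iff[of 1 r] by simp

lemma sum_only0: "(\<Sum>r\<in>{0..<int p}. if r = 0 then X else 0) = (X :: complex)" if "p > 0"
  using that by (simp add: sum.delta)

locale red =
  fixes p \<alpha> :: nat and a :: int
  assumes p: "prime p" and podd: "odd p" and ca: "coprime a (int p)" and a2: "\<alpha> \<ge> 2"
begin

abbreviation "q \<equiv> p ^ \<alpha>"
abbreviation "q' \<equiv> p ^ (\<alpha> - 2)"
abbreviation "m \<equiv> p ^ (\<alpha> - 1)"

lemma p_gt1: "p > 1" using p prime_gt_1_nat by blast
lemma q'_pos: "q' > 0" using p_gt1 by simp
lemma m_pos: "m > 0" using p_gt1 by simp
lemma q_pos: "q > 0" using p_gt1 by simp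
lemma ae: "\<alpha> = Suc (Suc (\<alpha> - 2))" "\<alpha> - 1 = Suc (\<alpha> - 2)" using a2 by auto
lemma qm: "q = m * p" by (subst ae(1), subst ae(2)) (simp add: ac_simps)
lemma mq': "m = q' * p" by (subst ae(2)) (simp add: ac_simps)
lemma qp: "q = p * (p * q')" using qm mq' by (simp add: ac_simps)
lemma pint: "prime (int p)" using p by simp

lemma not_dvd_2: "\<not> int p dvd 2"
proof
  assume "int p dvd 2"
  then have "p dvd 2" by presburger
  then have "p \<le> 2" by (rule dvd_imp_le) simp
  then have "p = 2" using p_gt1 by simp
  then show False using podd by simp
qed

lemma dvd_mult_iff: "int p dvd x * y \<longleftrightarrow> int p dvd x \<or> int p dvd y"
  using pint by (simp add: prime_dvd_mult_iff)

lemma au: "\<not> int p dvd a"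
proof
  assume "int p dvd a"
  then have "is_unit (int p)" using coprime_common_divisor[OF ca, of "int p"] by simp
  then show False using pint not_prime_unit by blast
qed

lemma gs_red: assumes c: "\<not> int p dvd c" shows "gs q c = of_nat p * gs q' c"
proof -
  have "gs q c = (\<Sum>x\<in>{0..<int m * int p}. ez q (c * x^2))" by (simp add: gs_def qm)
  also have "\<dots> = (\<Sum>r\<in>{0..<int m}. \<Sum>t\<in>{0..<int p}. ez q (c * (r + int m * t)^2))"
    by (rule sum_split) (use m_pos p_gt1 in auto)
  also have "\<dots> = (\<Sum>r\<in>{0..<int m}. ez q (c * r^2) * (if int p dvd r then of_nat p else 0))"
  proof (intro sum.cong refl)
    fix r
    have e: "ez q (c * (r + int m * t)^2) = ez q (c * r^2) * ez p (t * (2 * c * r))" for t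
    proof -
      have "ez q (c * (r + int m * t)^2) = ez q (c * r^2 + int m * (t * (2 * c * r)))"
      proof (rule ez_dvd[OF q_pos])
        have "c * (r + int m * t)^2 - (c * r^2 + int m * (t * (2 * c * r))) = int q * (c * int q' * t^2)"
          using qm mq' by (simp add: power2_eq_square algebra_simps)
        then show "int q dvd c * (r + int m * t)^2 - (c * r^2 + int m * (t * (2 * c * r)))" by simp
      qed
      also have "\<dots> = ez q (c * r^2) * ez (m * p) (int m * (t * (2 * c * r)))" by (simp add: eq_add qm)
      also have "ez (m * p) (int m * (t * (2 * c * r))) = ez p (t * (2 * c * r))" by (rule ez_scale[OF m_pos])
      finally show ?thesis .
    qed
    have cnd: "int p dvd 2 * c * r \<longleftrightarrow> int p dvd r" using dvd_mult_iff not_dvd_2 c by simp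
    have "(\<Sum>t\<in>{0..<int p}. ez q (c * (r + int m * t)^2)) = ez q (c * r^2) * (\<Sum>t\<in>{0..<int p}. ez p (t * (2 * c * r)))"
      by (simp only: e sum_distrib_left)
    also have "(\<Sum>t\<in>{0..<int p}. ez p (t * (2 * c * r))) = (if int p dvd 2 * c * r then of_nat p else 0)"
      using geom_sum[of p "2 * c * r"] p_gt1 by simp
    finally show "(\<Sum>t\<in>{0..<int p}. ez q (c * (r + int m * t)^2)) = ez q (c * r^2) * (if int p dvd r then of_nat p else 0)"
      by (simp only: cnd)
  qed
  also have "\<dots> = (\<Sum>r\<in>{0..<int p * int q'}. ez q (c * r^2) * (if int p dvd r then of_nat p else 0))"
    using mq' by (simp add: ac_simps)
  also have "\<dots> = (\<Sum>r0\<in>{0..<int p}. \<Sum>z\<in>{0..<int q'}. ez q (c * (r0 + int p * z)^2) * (if int p dvd (r0 + int p * z) then of_nat p else 0))"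
    by (rule sum_split) (use q'_pos p_gt1 in auto)
  also have "\<dots> = (\<Sum>r0\<in>{0..<int p}. if r0 = 0 then (\<Sum>z\<in>{0..<int q'}. ez q (c * (int p * z)^2) * of_nat p) else 0)"
  proof (intro sum.cong refl)
    fix r0 assume r0: "r0 \<in> {0..<int p}"
    show "(\<Sum>z\<in>{0..<int q'}. ez q (c * (r0 + int p * z)^2) * (if int p dvd (r0 + int p * z) then of_nat p else 0)) =
        (if r0 = 0 then (\<Sum>z\<in>{0..<int q'}. ez q (c * (int p * z)^2) * of_nat p) else 0)"
    proof (cases "r0 = 0")
      case False
      then have "\<not> int p dvd r0 + int p * z" for z using r0 by (simp add: dvd_add_left_iff zdvd_not_zless)
      then show ?thesis using False by simp
    qed simp
  qed
  also have "\<dots> = (\<Sum>z\<in>{0..<int q'}. ez q (c * (int p * z)^2) * of_nat p)" using sum_only0 p_gt1 by simp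
  also have "\<dots> = of_nat p * gs q' c"
  proof -
    have "ez q (c * (int p * z)^2) = ez q' (c * z^2)" for z
    proof -
      have "ez q (c * (int p * z)^2) = ez ((p * p) * q') (int (p * p) * (c * z^2))"
        using qp by (simp add: power2_eq_square ac_simps)
      also have "\<dots> = ez q' (c * z^2)" by (rule ez_scale) (use p_gt1 in simp)
      finally show ?thesis .
    qed
    then show ?thesis by (simp add: gs_def sum_distrib_left ac_simps)
  qed
  finally show ?thesis .
qed

lemma cs_red: "cs q = of_nat p * cs q'"
proof -
  have "sqrt (real q) = sqrt (real p * real p) * sqrt (real q')" using qp by (simp add: real_sqrt_mult)
  also have "sqrt (real p * real p) = real p" by simp
  finally show ?thesis by simp
qed

lemma sigma_red: "sigma q a = sigma q' a"
proof -
  have "\<not> int p dvd - a" using au by simp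
  then have "gs q (- a) = of_nat p * gs q' (- a)" by (rule gs_red)
  then show ?thesis using p_gt1 by (simp add: sigma_gs cs_red)
qed

definition iota :: "(int \<Rightarrow> complex) \<Rightarrow> (int \<Rightarrow> complex)" where
  "iota g = (\<lambda>x. if int p dvd x then g (x div int p) else 0)"

lemma iota_periodic: assumes g: "periodic q' g" shows "periodic q (iota g)"
proof -
  have "iota g (x + int q) = iota g x" for x
  proof -
    have d: "int p dvd x + int q \<longleftrightarrow> int p dvd x" using qp by (simp add: dvd_add_left_iff)
    have "(x + int q) div int p = x div int p + int q' * int p" if "int p dvd x"
      using that qp p_gt1 by (auto simp: ac_simps)
    then show ?thesis using d periodic_mult[OF g] by (simp add: iota_def)
  qed
  then show ?thesis by (simp add: periodic_def)
qed

lemma iota_T: "weil q a GenT (iota g) = iota (weil q' a GenT g)"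
proof
  fix x
  show "weil q a GenT (iota g) x = iota (weil q' a GenT g) x"
  proof (cases "int p dvd x")
    case True
    then obtain z where z: "x = int p * z" by blast
    have "ez q (a * x^2) = ez ((p * p) * q') (int (p * p) * (a * z^2))" using qp z by (simp add: power2_eq_square ac_simps)
    also have "\<dots> = ez q' (a * z^2)" by (rule ez_scale) (use p_gt1 in simp)
    finally show ?thesis using True z p_gt1 by (simp add: weilT iota_def)
  qed (simp add: weilT iota_def)
qed

lemma iota_S: assumes g: "periodic q' g" shows "weil q a GenS (iota g) = iota (weil q' a GenS g)"
proof
  fix y
  let ?T = "\<lambda>y1. (\<Sum>t0\<in>{0..<int q'}. ez q' (- (2 * a * y1 * t0)) * g t0)"
  have S0: "(\<Sum>x\<in>{0..<int q}. ez q (- (2 * a * y * x)) * iota g x) = (\<Sum>t\<in>{0..<int m}. ez m (- (2 * a * y * t)) * g t)"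
  proof -
    have "(\<Sum>x\<in>{0..<int q}. ez q (- (2 * a * y * x)) * iota g x) = (\<Sum>x\<in>{0..<int p * int m}. ez q (- (2 * a * y * x)) * iota g x)"
      using qm by (simp add: ac_simps)
    also have "\<dots> = (\<Sum>r\<in>{0..<int p}. \<Sum>t\<in>{0..<int m}. ez q (- (2 * a * y * (r + int p * t))) * iota g (r + int p * t))"
      by (rule sum_split) (use m_pos p_gt1 in auto)
    also have "\<dots> = (\<Sum>r\<in>{0..<int p}. if r = 0 then (\<Sum>t\<in>{0..<int m}. ez m (- (2 * a * y * t)) * g t) else 0)"
    proof (intro sum.cong refl)
      fix r assume r: "r \<in> {0..<int p}"
      show "(\<Sum>t\<in>{0..<int m}. ez q (- (2 * a * y * (r + int p * t))) * iota g (r + int p * t)) =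
          (if r = 0 then (\<Sum>t\<in>{0..<int m}. ez m (- (2 * a * y * t)) * g t) else 0)"
      proof (cases "r = 0")
        case True
        have "ez q (- (2 * a * y * (int p * t))) = ez m (- (2 * a * y * t))" for t
        proof -
          have "ez q (- (2 * a * y * (int p * t))) = ez (p * m) (int p * (- (2 * a * y * t)))" using qm by (simp add: ac_simps)
          also have "\<dots> = ez m (- (2 * a * y * t))" by (rule ez_scale) (use p_gt1 in simp)
          finally show ?thesis .
        qed
        then show ?thesis using True p_gt1 by (simp add: iota_def)
      next
        case False
        then have "\<not> int p dvd r + int p * t" for t using r by (simp add: dvd_add_left_iff zdvd_not_zless)
        then show ?thesis using False by (simp add: iota_def)
      qed
    qed
    also have "\<dots> = (\<Sum>t\<in>{0..<int m}. ez m (- (2 * a * y * t)) * g t)" using sum_only0 p_gt1 by simp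
    finally show ?thesis .
  qed
  have S1: "(\<Sum>t\<in>{0..<int m}. ez m (- (2 * a * y * t)) * g t) = (if int p dvd y then of_nat p else 0) * (\<Sum>t0\<in>{0..<int q'}. ez m (- (2 * a * y * t0)) * g t0)"
  proof -
    have "(\<Sum>t\<in>{0..<int m}. ez m (- (2 * a * y * t)) * g t) = (\<Sum>t\<in>{0..<int q' * int p}. ez m (- (2 * a * y * t)) * g t)"
      using mq' by (simp add: ac_simps)
    also have "\<dots> = (\<Sum>t0\<in>{0..<int q'}. \<Sum>s\<in>{0..<int p}. ez m (- (2 * a * y * (t0 + int q' * s))) * g (t0 + int q' * s))"
      by (rule sum_split) (use q'_pos p_gt1 in auto)
    also have "\<dots> = (\<Sum>t0\<in>{0..<int q'}. ez m (- (2 * a * y * t0)) * g t0 * (\<Sum>s\<in>{0..<int p}. ez p (s * (- (2 * a * y)))))"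
    proof (intro sum.cong refl)
      fix t0
      have "ez m (- (2 * a * y * (t0 + int q' * s))) * g (t0 + int q' * s) = ez m (- (2 * a * y * t0)) * g t0 * ez p (s * (- (2 * a * y)))" for s
      proof -
        have "ez m (- (2 * a * y * (t0 + int q' * s))) = ez m (- (2 * a * y * t0) + int q' * (s * (- (2 * a * y))))"
          by (simp add: algebra_simps)
        also have "\<dots> = ez m (- (2 * a * y * t0)) * ez (q' * p) (int q' * (s * (- (2 * a * y))))" by (simp only: mq'[symmetric] eq_add)
        also have "ez (q' * p) (int q' * (s * (- (2 * a * y)))) = ez p (s * (- (2 * a * y)))" by (rule ez_scale[OF q'_pos])
        finally show ?thesis using periodic_mult[OF g] by simp
      qed
      then show "(\<Sum>s\<in>{0..<int p}. ez m (- (2 * a * y * (t0 + int q' * s))) * g (t0 + int q' * s)) =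
          ez m (- (2 * a * y * t0)) * g t0 * (\<Sum>s\<in>{0..<int p}. ez p (s * (- (2 * a * y))))"
        by (simp add: sum_distrib_left)
    qed
    also have "(\<Sum>s\<in>{0..<int p}. ez p (s * (- (2 * a * y)))) = (if int p dvd y then of_nat p else 0)"
    proof -
      have "int p dvd - (2 * a * y) \<longleftrightarrow> int p dvd y" using dvd_mult_iff not_dvd_2 au by simp
      then show ?thesis using geom_sum[of p "- (2 * a * y)"] p_gt1 by simp
    qed
    also have "(\<Sum>t0\<in>{0..<int q'}. ez m (- (2 * a * y * t0)) * g t0 * (if int p dvd y then of_nat p else 0)) =
        (\<Sum>t0\<in>{0..<int q'}. ez m (- (2 * a * y * t0)) * g t0) * (if int p dvd y then of_nat p else 0)"
      by (rule sum_distrib_right[symmetric])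
    also have "\<dots> = (if int p dvd y then of_nat p else 0) * (\<Sum>t0\<in>{0..<int q'}. ez m (- (2 * a * y * t0)) * g t0)"
      by (rule mult.commute)
    finally show ?thesis .
  qed
  show "weil q a GenS (iota g) y = iota (weil q' a GenS g) y"
  proof (cases "int p dvd y")
    case False
    then show ?thesis using S0 S1 by (simp add: weilS iota_def)
  next
    case True
    then obtain y1 where y1: "y = int p * y1" by blast
    have "ez m (- (2 * a * y * t0)) = ez q' (- (2 * a * y1 * t0))" for t0
    proof -
      have "ez m (- (2 * a * y * t0)) = ez (p * q') (int p * (- (2 * a * y1 * t0)))" using mq' y1 by (simp add: ac_simps)
      also have "\<dots> = ez q' (- (2 * a * y1 * t0))" by (rule ez_scale) (use p_gt1 in simp)
      finally show ?thesis .
    qed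
    then have "weil q a GenS (iota g) y = sigma q a / cs q * (of_nat p * ?T y1)"
      using S0 S1 True by (simp add: weilS)
    also have "\<dots> = sigma q' a / cs q' * ?T y1"
      using sigma_red cs_red p_gt1 cs_nz[OF q'_pos] by (simp add: field_simps)
    also have "\<dots> = iota (weil q' a GenS g) y" using True y1 p_gt1 by (simp add: weilS iota_def)
    finally show ?thesis .
  qed
qed

lemma iota_word: assumes g: "periodic q' g"
  shows "word_act (weil q a) w (iota g) = iota (word_act (weil q' a) w g)"
proof (induction w)
  case Nil then show ?case by simp
next
  case (Cons x w)
  have wg: "periodic q' (word_act (weil q' a) w g)" using word_act_periodic[OF q'_pos g] .
  show ?case
  proof (cases x)
    case GenS then show ?thesis using Cons iota_S[OF wg] by simp
  next
    case GenT then show ?thesis using Cons iota_T by simp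
  qed
qed

end


lemma ez_one': "ez (Suc 0) r = 1" using ez_one by simp

lemma one_triv: assumes f: "periodic 1 f" shows "weil 1 a g f = f"
proof -
  have fc: "f x = f 0" for x using periodic_cong[OF f, of x 0] by (simp add: congdef)
  show ?thesis
  proof (cases g)
    case GenT then show ?thesis by (simp add: weilT ez_one ez_one')
  next
    case GenS
    have "sigma 1 a = 1" by (simp add: sigma_gs gs_def ez_one ez_one')
    moreover have "{0..<1::int} = {0}" by auto
    ultimately show ?thesis using GenS fc by (simp add: weilS ez_one ez_one' fun_eq_iff) (metis fc)
  qed
qed

lemma one_word: "periodic 1 f \<Longrightarrow> word_act (weil 1 a) w f = f"
proof (induction w)
  case Nil then show ?case by simp
next
  case (Cons x w) then show ?case using one_triv by simp
qed

lemma gamma_all: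
  assumes p: "prime p" and podd: "odd p" and ca: "coprime a (int p)"
  shows "in_Gamma (p ^ \<alpha>) (word_mat w) \<Longrightarrow> periodic (p ^ \<alpha>) f \<Longrightarrow> word_act (weil (p ^ \<alpha>) a) w f = f"
proof (induction \<alpha> arbitrary: f rule: less_induct)
  case (less \<alpha>)
  show ?case
  proof (cases "\<alpha> \<ge> 2")
    case False
    then consider "\<alpha> = 0" | "\<alpha> = 1" by linarith
    then show ?thesis
    proof cases
      case 1 then show ?thesis using less.prems one_word by simp
    next
      case 2
      interpret pcase p a using p podd ca by unfold_locales
      show ?thesis using less.prems 2 prime_gamma by simp
    qed
  next
    case True
    interpret R: red p \<alpha> a using p podd ca True by unfold_locales
    have q'q: "int R.q' dvd int R.q" using R.qp by simp
    have G': "in_Gamma R.q' (word_mat w)"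
      using less.prems(1) cong_dvd_modulus[OF _ q'q] by (auto simp: in_Gamma_def split: prod.splits)
    have IH: "word_act (weil R.q' a) w g = g" if "periodic R.q' g" for g
      using less.IH[of "\<alpha> - 2"] True G' that by simp
    have c2a: "coprime (2 * a) (int R.q)"
    proof -
      have "coprime 2 (int p)" using R.not_dvd_2 R.pint prime_imp_coprime coprime_commute by blast
      then have "coprime (2 * a) (int p)" using ca by simp
      then show ?thesis by (simp add: of_nat_power coprime_power_right_iff)
    qed
    obtain c where c: "\<And>f. periodic R.q f \<Longrightarrow> word_act (weil R.q a) w f = (\<lambda>x. c * f x)"
      using scalar[OF R.q_pos c2a less.prems(1)] by blast
    let ?d = "R.iota (delta0 R.q')"
    have dp: "periodic R.q ?d" using R.iota_periodic[OF delta0_periodic] .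
    have "word_act (weil R.q a) w ?d = R.iota (word_act (weil R.q' a) w (delta0 R.q'))"
      by (rule R.iota_word[OF delta0_periodic])
    also have "\<dots> = ?d" using IH[OF delta0_periodic] by simp
    finally have "(\<lambda>x. c * ?d x) = ?d" using c[OF dp] by simp
    then have "c * ?d 0 = ?d 0" by metis
    moreover have "?d 0 = 1" by (simp add: R.iota_def delta0_def)
    ultimately have "c = 1" by simp
    then show ?thesis using c[OF less.prems(2)] by simp
  qed
qed

theorem lemma2:
  fixes p \<alpha> :: nat and a :: int and \<epsilon> :: int
  assumes "prime p" and "odd p" and "\<alpha> \<ge> 1" and "coprime a (int p)" and "\<epsilon> \<in> {1, -1}"
  shows "irreducible_mod (weil (p ^ \<alpha>) a) (W1eps p \<alpha> \<epsilon>)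
    \<and> Gamma_trivial (weil (p ^ \<alpha>) a) (W1eps p \<alpha> \<epsilon>) (p ^ \<alpha>)
    \<and> (\<forall>N > 0. Gamma_trivial (weil (p ^ \<alpha>) a) (W1eps p \<alpha> \<epsilon>) N \<longrightarrow> p ^ \<alpha> \<le> N)
    \<and> (\<forall>\<alpha>' a' \<epsilon>'. \<alpha>' \<ge> 1 \<longrightarrow> coprime a' (int p) \<longrightarrow> \<epsilon>' \<in> {1, -1} \<longrightarrow>
         (iso_mod (weil (p ^ \<alpha>) a) (W1eps p \<alpha> \<epsilon>) (weil (p ^ \<alpha>') a') (W1eps p \<alpha>' \<epsilon>')
          \<longleftrightarrow> p ^ \<alpha> = p ^ \<alpha>' \<and> \<epsilon> = \<epsilon>' \<and> (\<exists>x. [a * a' = x ^ 2] (mod int p))))"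
proof -
  have A: "wsetup p \<alpha> a \<epsilon>" using assms by unfold_locales
  interpret A: wsetup p \<alpha> a \<epsilon> by (rule A)
  have 1: "irreducible_mod (weil (p ^ \<alpha>) a) (W1eps p \<alpha> \<epsilon>)" by (rule A.irreducible)
  have 2: "Gamma_trivial (weil (p ^ \<alpha>) a) (W1eps p \<alpha> \<epsilon>) (p ^ \<alpha>)"
    unfolding Gamma_trivial_def using gamma_all[OF assms(1,2,4)] A.W1_periodic by blast
  have 3: "\<forall>N > 0. Gamma_trivial (weil (p ^ \<alpha>) a) (W1eps p \<alpha> \<epsilon>) N \<longrightarrow> p ^ \<alpha> \<le> N"
    using A.minimal by blast
  have 4: "iso_mod (weil (p ^ \<alpha>) a) (W1eps p \<alpha> \<epsilon>) (weil (p ^ \<alpha>') a') (W1eps p \<alpha>' \<epsilon>')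
          \<longleftrightarrow> p ^ \<alpha> = p ^ \<alpha>' \<and> \<epsilon> = \<epsilon>' \<and> (\<exists>x. [a * a' = x ^ 2] (mod int p))"
    if h: "\<alpha>' \<ge> 1" "coprime a' (int p)" "\<epsilon>' \<in> {1, -1}" for \<alpha>' a' \<epsilon>'
  proof
    have B: "wsetup p \<alpha>' a' \<epsilon>'" using assms h by unfold_locales
    assume "iso_mod (weil (p ^ \<alpha>) a) (W1eps p \<alpha> \<epsilon>) (weil (p ^ \<alpha>') a') (W1eps p \<alpha>' \<epsilon>')"
    then show "p ^ \<alpha> = p ^ \<alpha>' \<and> \<epsilon> = \<epsilon>' \<and> (\<exists>x. [a * a' = x ^ 2] (mod int p))" by (rule iso_fwd[OF A B])
  next
    assume r: "p ^ \<alpha> = p ^ \<alpha>' \<and> \<epsilon> = \<epsilon>' \<and> (\<exists>x. [a * a' = x ^ 2] (mod int p))"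
    then have "\<alpha> = \<alpha>'" using A.p_gt1 power_inject_exp by blast
    moreover have B: "wsetup p \<alpha> a' \<epsilon>" using assms h by unfold_locales
    ultimately show "iso_mod (weil (p ^ \<alpha>) a) (W1eps p \<alpha> \<epsilon>) (weil (p ^ \<alpha>') a') (W1eps p \<alpha>' \<epsilon>')"
      using r iso_rev[OF A B] by auto
  qed
  show ?thesis using 1 2 3 4 by blast
qed


end
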